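(* Let $N\ge 2$, $a>-1$ and $\beta\in\{1,2,4\}$, corresponding respectively to correlation matrices with real, complex or quaternion entries. Let $\mathcal R_N^{(\beta)}$ be the set of $N\times N$ correlation matrices $R=[\rho_{jk}]$ over the corresponding field, with the measure $(\mathrm dR)$ equal to the product of Lebesgue measures over the $\beta$ real coordinates of each entry $\rho_{jk}$, $1\le k<j\le N$. Then $$C^{(\beta)}_{a,N}:=\int_{\mathcal R_N^{(\beta)}}(\det R)^a\,(\mathrm dR)=\prod_{k=1}^{N-1}\prod_{s=0}^{\beta-1}\left(B\left(a+\frac{\beta k+1-s}{2},\frac12\right)\right)^k=\prod_{k=1}^{N-1}\left(\frac{\pi^{\beta/2}\,\Gamma\left(a+\frac{\beta(k-1)}{2}+1\right)}{\Gamma\left(a+\frac{\beta k}{2}+1\right)}\right)^k$$ $$=\frac{\pi^{\beta N(N-1)/4}}{\left(\Gamma\left(a+\frac\beta2(N-1)+1\right)\right)^{N-1}}\prod_{k=1}^{N-1}\Gamma\left(a+\frac\beta2(k-1)+1\right).$$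
   Context: For $\beta=1$: a correlation matrix is a real symmetric positive definite matrix with unit diagonal. For $\beta=2$: a complex Hermitian positive definite matrix with unit diagonal; each entry has two real coordinates (real and imaginary parts). For $\beta=4$: a quaternion matrix, represented as a $2N\times 2N$ complex Hermitian positive definite matrix made of $2\times2$ blocks $\begin{bmatrix}z&w\\-\bar w&\bar z\end{bmatrix}$ with diagonal blocks equal to $I_2$; each off-diagonal block has the four real coordinates $\mathrm{Re}\,z,\mathrm{Im}\,z,\mathrm{Re}\,w,\mathrm{Im}\,w$, and $\det R$ is defined as the positive square root of the determinant of the $2N\times 2N$ complex matrix. $B(x,y)=\Gamma(x)\Gamma(y)/\Gamma(x+y)$. *)

theory Defs
  imports "HOL-Analysis.Analysis" "HOL-Combinatorics.Permutations"
begin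

text \<open>Coordinates of a correlation matrix: a real function on the index set of triples
  (j,k,s) with 0 <= k < j < N and s < beta; (j,k,s) is the s-th real coordinate of the entry
  rho_jk (0-based indices).\<close>
definition corr_index :: "nat \<Rightarrow> nat \<Rightarrow> (nat \<times> nat \<times> nat) set" where
  "corr_index \<beta> N = {(j,k,s). k < j \<and> j < N \<and> s < \<beta>}"

text \<open>Size of the associated complex matrix (2N x 2N for quaternions).\<close>
definition corr_size :: "nat \<Rightarrow> nat \<Rightarrow> nat" where
  "corr_size \<beta> N = (if \<beta> = 4 then 2 * N else N)"

definition low_entry :: "nat \<Rightarrow> (nat \<times> nat \<times> nat \<Rightarrow> real) \<Rightarrow> nat \<Rightarrow> nat \<Rightarrow> complex" where
  "low_entry \<beta> x j k = Complex (x (j,k,0)) (if \<beta> = 2 then x (j,k,1) else 0)"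

text \<open>Quaternion block for k < j: [[z, w], [-conj w, conj z]], z = x0 + i x1, w = x2 + i x3.\<close>
definition low_block :: "(nat \<times> nat \<times> nat \<Rightarrow> real) \<Rightarrow> nat \<Rightarrow> nat \<Rightarrow> nat \<Rightarrow> nat \<Rightarrow> complex" where
  "low_block x j k a b =
    (let z = Complex (x (j,k,0)) (x (j,k,1)); w = Complex (x (j,k,2)) (x (j,k,3)) in
     if a = 0 \<and> b = 0 then z else if a = 0 then w else if b = 0 then - cnj w else cnj z)"

definition corr_mat :: "nat \<Rightarrow> nat \<Rightarrow> (nat \<times> nat \<times> nat \<Rightarrow> real) \<Rightarrow> nat \<Rightarrow> nat \<Rightarrow> complex" where
  "corr_mat \<beta> N x p q =
    (if \<beta> = 4 then
       (let j = p div 2; a = p mod 2; k = q div 2; b = q mod 2 in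
        if j = k then (if a = b then 1 else 0)
        else if k < j then low_block x j k a b
        else cnj (low_block x k j b a))
     else
       (if p = q then 1
        else if q < p then low_entry \<beta> x p q
        else cnj (low_entry \<beta> x q p)))"

definition cdet :: "nat \<Rightarrow> (nat \<Rightarrow> nat \<Rightarrow> complex) \<Rightarrow> complex" where
  "cdet n M = (\<Sum>p | p permutes {..<n}. of_int (sign p) * (\<Prod>i<n. M i (p i)))"

definition hermitian_pd :: "nat \<Rightarrow> (nat \<Rightarrow> nat \<Rightarrow> complex) \<Rightarrow> bool" where
  "hermitian_pd n M \<longleftrightarrow>
     (\<forall>i<n. \<forall>j<n. M i j = cnj (M j i)) \<and>
     (\<forall>v :: nat \<Rightarrow> complex. (\<exists>i<n. v i \<noteq> 0) \<longrightarrow>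
        Re (\<Sum>i<n. \<Sum>j<n. cnj (v i) * M i j * v j) > 0)"

definition corr_set :: "nat \<Rightarrow> nat \<Rightarrow> (nat \<times> nat \<times> nat \<Rightarrow> real) set" where
  "corr_set \<beta> N = {x. hermitian_pd (corr_size \<beta> N) (corr_mat \<beta> N x)}"

text \<open>det R; for beta = 4 the positive square root of the 2N x 2N complex determinant.\<close>
definition corr_det :: "nat \<Rightarrow> nat \<Rightarrow> (nat \<times> nat \<times> nat \<Rightarrow> real) \<Rightarrow> real" where
  "corr_det \<beta> N x =
    (let d = Re (cdet (corr_size \<beta> N) (corr_mat \<beta> N x)) in if \<beta> = 4 then sqrt d else d)"

definition corr_measure :: "nat \<Rightarrow> nat \<Rightarrow> (nat \<times> nat \<times> nat \<Rightarrow> real) measure" where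
  "corr_measure \<beta> N = PiM (corr_index \<beta> N) (\<lambda>_. lborel)"

end

theory Submission
  imports Defs "HOL-Analysis.Analysis" "Jordan_Normal_Form.Determinant"
begin

lemma measurable_coord_any:
  "(\<lambda>w. w i) \<in> borel_measurable (PiM I (\<lambda>_. lborel :: real measure))"
proof (cases "i \<in> I")
  case True
  thus ?thesis using measurable_component_singleton[OF True, of "\<lambda>_. lborel"] by simp
next
  case False
  have "\<forall>w\<in>space (PiM I (\<lambda>_. lborel :: real measure)). w i = undefined"
    using False by (auto simp: space_PiM PiE_def extensional_def)
  thus ?thesis by (subst measurable_cong[where g="\<lambda>_. undefined"]) auto
qed

lemma tri_cov:
  fixes I :: "'i set" and r :: "'i \<Rightarrow> nat" and c d :: "'i \<Rightarrow> ('i \<Rightarrow> real) \<Rightarrow> real"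
  assumes fin: "finite I" and inj: "inj_on r I"
    and dep: "\<And>i w w'. i \<in> I \<Longrightarrow> (\<And>j. j \<in> I \<Longrightarrow> r j < r i \<Longrightarrow> w j = w' j) \<Longrightarrow> c i w = c i w' \<and> d i w = d i w'"
    and pos: "\<And>i w. i \<in> I \<Longrightarrow> c i w > 0"
    and mc: "\<And>i J. i \<in> I \<Longrightarrow> c i \<in> borel_measurable (PiM J (\<lambda>_. lborel))"
    and md: "\<And>i J. i \<in> I \<Longrightarrow> d i \<in> borel_measurable (PiM J (\<lambda>_. lborel))"
    and g: "g \<in> borel_measurable (PiM I (\<lambda>_. lborel))"
  shows "(\<integral>\<^sup>+w. g (\<lambda>i\<in>I. c i w * w i + d i w) * ennreal (\<Prod>i\<in>I. c i w) \<partial>PiM I (\<lambda>_. lborel))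
         = (\<integral>\<^sup>+w. g w \<partial>PiM I (\<lambda>_. lborel))"
  using fin inj dep pos mc md g
proof (induction I arbitrary: g rule: finite_psubset_induct)
  case (psubset I)
  interpret product_sigma_finite "\<lambda>_. lborel :: real measure" by standard
  show ?case
  proof (cases "I = {}")
    case True
    show ?thesis unfolding True
      by (intro nn_integral_cong) (auto simp: space_PiM)
  next
    case False
    have "Max (r ` I) \<in> r ` I" using False psubset.hyps by (intro Max_in) auto
    then obtain i where iI: "i \<in> I" and imax: "r i = Max (r ` I)" by (auto simp: image_iff)
    define I' where "I' = I - {i}"
    have II': "I = insert i I'" and iI': "i \<notin> I'" and fI': "finite I'" and sub: "I' \<subset> I"
      using iI psubset.hyps by (auto simp: I'_def)
    have rle: "r j \<le> r i" if "j \<in> I" for j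
      using that psubset.hyps imax by simp
    have rless: "r j < r i" if "j \<in> I'" for j
    proof -
      have "r j \<le> r i" using that psubset.hyps imax by (auto simp: I'_def)
      moreover have "r j \<noteq> r i" using that iI psubset.prems(1) by (auto simp: I'_def inj_on_def)
      ultimately show ?thesis by simp
    qed
    have depI: "c j (w(i:=y)) = c j w \<and> d j (w(i:=y)) = d j w" if "j \<in> I" for j w y
    proof -
      have "r k < r j \<Longrightarrow> k \<in> I \<Longrightarrow> (w(i:=y)) k = w k" for k
        using that rle[of k] rle[of j] by (cases "k = i") (auto simp: I'_def)
      thus ?thesis using psubset.prems(2)[OF that, of "w(i:=y)" w] by blast
    qed
    have [measurable]: "j \<in> I \<Longrightarrow> c j \<in> borel_measurable (PiM J (\<lambda>_. lborel))" for j J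
      using psubset.prems(4) by auto
    have [measurable]: "j \<in> I \<Longrightarrow> d j \<in> borel_measurable (PiM J (\<lambda>_. lborel))" for j J
      using psubset.prems(5) by auto
    note g[measurable] = psubset.prems(6)
    have coord: "(\<lambda>w. w j) \<in> borel_measurable (PiM J (\<lambda>_. lborel :: real measure))" for j :: 'i and J
      by (rule measurable_coord_any)
    define T' where "T' x = (\<lambda>j\<in>I'. c j x * x j + d j x)" for x
    define H where "H v = (\<integral>\<^sup>+s. g (v(i:=s)) \<partial>lborel)" for v
    have T'meas[measurable]: "T' \<in> measurable (PiM I' (\<lambda>_. lborel)) (PiM I' (\<lambda>_. lborel))"
      unfolding T'_def by (rule measurable_restrict) (use II' in auto)
    have Tmeas: "(\<lambda>w. \<lambda>j\<in>I. c j w * w j + d j w) \<in> measurable (PiM I (\<lambda>_. lborel)) (PiM I (\<lambda>_. lborel))"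
      by (rule measurable_restrict) auto
    have Hmeas[measurable]: "H \<in> borel_measurable (PiM I' (\<lambda>_. lborel))"
    proof -
      have "(\<lambda>(v, s). g (v(i:=s))) \<in> borel_measurable (PiM I' (\<lambda>_. lborel) \<Otimes>\<^sub>M lborel)"
        using measurable_comp[OF measurable_add_dim[of i I' "\<lambda>_. lborel"] g[unfolded II']]
        by (simp add: comp_def case_prod_unfold)
      then show ?thesis unfolding H_def by measurable
    qed
    have LHS: "(\<integral>\<^sup>+w. g (\<lambda>j\<in>I. c j w * w j + d j w) * ennreal (\<Prod>j\<in>I. c j w) \<partial>PiM I (\<lambda>_. lborel))
        = (\<integral>\<^sup>+x. H (T' x) * ennreal (\<Prod>j\<in>I'. c j x) \<partial>PiM I' (\<lambda>_. lborel))"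
    proof -
      have m: "(\<lambda>w. g (\<lambda>j\<in>I. c j w * w j + d j w) * ennreal (\<Prod>j\<in>I. c j w)) \<in> borel_measurable (PiM (insert i I') (\<lambda>_. lborel))"
        unfolding II'[symmetric] using measurable_comp[OF Tmeas g] by (simp add: comp_def)
      have "(\<integral>\<^sup>+w. g (\<lambda>j\<in>I. c j w * w j + d j w) * ennreal (\<Prod>j\<in>I. c j w) \<partial>PiM I (\<lambda>_. lborel))
         = (\<integral>\<^sup>+x. \<integral>\<^sup>+y. g (\<lambda>j\<in>I. c j (x(i:=y)) * (x(i:=y)) j + d j (x(i:=y))) * ennreal (\<Prod>j\<in>I. c j (x(i:=y))) \<partial>lborel \<partial>PiM I' (\<lambda>_. lborel))"
        using product_nn_integral_insert[OF fI' iI' m] by (simp only: II'[symmetric])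
      also have "\<dots> = (\<integral>\<^sup>+x. H (T' x) * ennreal (\<Prod>j\<in>I'. c j x) \<partial>PiM I' (\<lambda>_. lborel))"
      proof (rule nn_integral_cong)
        fix x assume x: "x \<in> space (PiM I' (\<lambda>_. lborel :: real measure))"
        have T'x: "T' x \<in> space (PiM I' (\<lambda>_. lborel :: real measure))"
          using measurable_space[OF T'meas x] .
        have eqT: "(\<lambda>j\<in>I. c j (x(i:=y)) * (x(i:=y)) j + d j (x(i:=y))) = (T' x)(i := c i x * y + d i x)" for y
        proof
          fix j show "(\<lambda>j\<in>I. c j (x(i:=y)) * (x(i:=y)) j + d j (x(i:=y))) j = ((T' x)(i := c i x * y + d i x)) j"
            using depI[of j x y] depI[OF iI, of x y] II' iI' by (auto simp: T'_def)
        qed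
        have eqP: "(\<Prod>j\<in>I. c j (x(i:=y))) = c i x * (\<Prod>j\<in>I'. c j x)" for y
        proof -
          have "(\<Prod>j\<in>I. c j (x(i:=y))) = (\<Prod>j\<in>I. c j x)"
            using depI by (intro prod.cong) auto
          thus ?thesis unfolding II' using fI' iI' by simp
        qed
        have cpos: "c i x > 0" using psubset.prems(3)[OF iI] .
        have Pnn: "(\<Prod>j\<in>I'. c j x) \<ge> 0" using psubset.prems(3) II' by (intro prod_nonneg) (auto intro: less_imp_le)
        have gm: "(\<lambda>s. g ((T' x)(i := s))) \<in> borel_measurable borel"
          using measurable_comp[OF measurable_component_update[OF T'x iI'] g[unfolded II']]
          by (simp add: comp_def)
        have gm2: "(\<lambda>y. g ((T' x)(i := d i x + c i x * y))) \<in> borel_measurable borel"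
        proof -
          have "(\<lambda>y. d i x + c i x * y) \<in> borel_measurable borel" by simp
          from measurable_comp[OF this gm] show ?thesis by (simp add: comp_def)
        qed
        have "(\<integral>\<^sup>+y. g (\<lambda>j\<in>I. c j (x(i:=y)) * (x(i:=y)) j + d j (x(i:=y))) * ennreal (\<Prod>j\<in>I. c j (x(i:=y))) \<partial>lborel)
            = (\<integral>\<^sup>+y. (ennreal \<bar>c i x\<bar> * g ((T' x)(i := d i x + c i x * y))) * ennreal (\<Prod>j\<in>I'. c j x) \<partial>lborel)"
          using cpos Pnn by (intro nn_integral_cong) (simp only: eqT eqP, simp add: ennreal_mult mult_ac add.commute)
        also have "\<dots> = (\<integral>\<^sup>+y. ennreal \<bar>c i x\<bar> * g ((T' x)(i := d i x + c i x * y)) \<partial>lborel) * ennreal (\<Prod>j\<in>I'. c j x)"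
          by (rule nn_integral_multc) (use gm2 in \<open>simp add: borel_measurable_times_ennreal\<close>)
        also have "(\<integral>\<^sup>+y. ennreal \<bar>c i x\<bar> * g ((T' x)(i := d i x + c i x * y)) \<partial>lborel)
              = ennreal \<bar>c i x\<bar> * (\<integral>\<^sup>+y. g ((T' x)(i := d i x + c i x * y)) \<partial>lborel)"
          by (rule nn_integral_cmult) (use gm2 in simp)
        also have "\<dots> = H (T' x)"
          unfolding H_def using nn_integral_real_affine[OF gm, of "c i x" "d i x"] cpos by simp
        finally show "(\<integral>\<^sup>+y. g (\<lambda>j\<in>I. c j (x(i:=y)) * (x(i:=y)) j + d j (x(i:=y))) * ennreal (\<Prod>j\<in>I. c j (x(i:=y))) \<partial>lborel)
            = H (T' x) * ennreal (\<Prod>j\<in>I'. c j x)" .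
      qed
      finally show ?thesis .
    qed
    have IH: "(\<integral>\<^sup>+x. H (\<lambda>j\<in>I'. c j x * x j + d j x) * ennreal (\<Prod>j\<in>I'. c j x) \<partial>PiM I' (\<lambda>_. lborel))
        = (\<integral>\<^sup>+v. H v \<partial>PiM I' (\<lambda>_. lborel))"
    proof (rule psubset.IH[OF sub])
      show "inj_on r I'" using psubset.prems(1) sub by (auto intro: inj_on_subset)
      show "c j w = c j w' \<and> d j w = d j w'" if "j \<in> I'" "\<And>k. k \<in> I' \<Longrightarrow> r k < r j \<Longrightarrow> w k = w' k" for j w w'
      proof (rule psubset.prems(2))
        show "j \<in> I" using that sub by auto
        fix k assume "k \<in> I" "r k < r j"
        moreover have "k \<noteq> i" using \<open>r k < r j\<close> rless[OF that(1)] by auto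
        ultimately show "w k = w' k" using that(2) by (auto simp: I'_def)
      qed
    qed (use psubset.prems(3,4,5) sub fI' Hmeas in auto)
    have fin: "(\<integral>\<^sup>+v. H v \<partial>PiM I' (\<lambda>_. lborel)) = (\<integral>\<^sup>+w. g w \<partial>PiM I (\<lambda>_. lborel))"
      unfolding H_def II' by (rule product_nn_integral_insert[OF fI' iI', symmetric]) (use g II' in simp)
    show ?thesis using LHS IH fin unfolding T'_def by (simp only:)
  qed
qed

lemma tri_inv:
  fixes I :: "'i set" and r :: "'i \<Rightarrow> nat" and c d :: "'i \<Rightarrow> ('i \<Rightarrow> real) \<Rightarrow> real"
  assumes fin: "finite I" and inj: "inj_on r I"
    and dep: "\<And>i w w'. i \<in> I \<Longrightarrow> (\<And>j. j \<in> I \<Longrightarrow> r j < r i \<Longrightarrow> w j = w' j) \<Longrightarrow> c i w = c i w' \<and> d i w = d i w'"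
    and pos: "\<And>i w. i \<in> I \<Longrightarrow> c i w > 0"
    and mc: "\<And>i J. i \<in> I \<Longrightarrow> c i \<in> borel_measurable (PiM J (\<lambda>_. lborel))"
    and md: "\<And>i J. i \<in> I \<Longrightarrow> d i \<in> borel_measurable (PiM J (\<lambda>_. lborel))"
  shows "\<exists>S \<in> PiM I (\<lambda>_. lborel) \<rightarrow>\<^sub>M PiM I (\<lambda>_. lborel). \<forall>\<rho>\<in>space (PiM I (\<lambda>_. lborel)).
            (\<lambda>i\<in>I. c i (S \<rho>) * S \<rho> i + d i (S \<rho>)) = \<rho>"
  using fin inj dep pos mc md
proof (induction I rule: finite_psubset_induct)
  case (psubset I)
  show ?case
  proof (cases "I = {}")
    case True
    show ?thesis by (intro bexI[of _ "\<lambda>\<rho>. \<rho>"]) (auto simp: True space_PiM)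
  next
    case False
    have "Max (r ` I) \<in> r ` I" using False psubset.hyps by (intro Max_in) auto
    then obtain i where iI: "i \<in> I" and imax: "r i = Max (r ` I)" by (auto simp: image_iff)
    define I' where "I' = I - {i}"
    have II': "I = insert i I'" and iI': "i \<notin> I'" and fI': "finite I'" and sub: "I' \<subset> I"
      using iI psubset.hyps by (auto simp: I'_def)
    have rle: "r j \<le> r i" if "j \<in> I" for j
      using that psubset.hyps imax by simp
    have rless: "r j < r i" if "j \<in> I'" for j
    proof -
      have "r j \<le> r i" using that psubset.hyps imax by (auto simp: I'_def)
      moreover have "r j \<noteq> r i" using that iI psubset.prems(1) by (auto simp: I'_def inj_on_def)
      ultimately show ?thesis by simp
    qed
    have depI: "c j (w(i:=y)) = c j w \<and> d j (w(i:=y)) = d j w" if "j \<in> I" for j w y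
    proof -
      have "r k < r j \<Longrightarrow> k \<in> I \<Longrightarrow> (w(i:=y)) k = w k" for k
        using that rle[of k] rle[of j] by (cases "k = i") (auto simp: I'_def)
      thus ?thesis using psubset.prems(2)[OF that, of "w(i:=y)" w] by blast
    qed
    have coord: "(\<lambda>w. w j) \<in> borel_measurable (PiM J (\<lambda>_. lborel :: real measure))" for j :: 'i and J
      by (rule measurable_coord_any)
    obtain S' where S'm: "S' \<in> PiM I' (\<lambda>_. lborel) \<rightarrow>\<^sub>M PiM I' (\<lambda>_. lborel)"
      and S'inv: "\<And>\<rho>. \<rho> \<in> space (PiM I' (\<lambda>_. lborel)) \<Longrightarrow> (\<lambda>j\<in>I'. c j (S' \<rho>) * S' \<rho> j + d j (S' \<rho>)) = \<rho>"
    proof -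
      have "\<exists>S \<in> PiM I' (\<lambda>_. lborel) \<rightarrow>\<^sub>M PiM I' (\<lambda>_. lborel). \<forall>\<rho>\<in>space (PiM I' (\<lambda>_. lborel)).
            (\<lambda>i\<in>I'. c i (S \<rho>) * S \<rho> i + d i (S \<rho>)) = \<rho>"
      proof (rule psubset.IH[OF sub])
        show "inj_on r I'" using psubset.prems(1) sub by (auto intro: inj_on_subset)
        show "c j w = c j w' \<and> d j w = d j w'" if "j \<in> I'" "\<And>k. k \<in> I' \<Longrightarrow> r k < r j \<Longrightarrow> w k = w' k" for j w w'
        proof (rule psubset.prems(2))
          show "j \<in> I" using that sub by auto
          fix k assume "k \<in> I" "r k < r j"
          moreover have "k \<noteq> i" using \<open>r k < r j\<close> rless[OF that(1)] by auto
          ultimately show "w k = w' k" using that(2) by (auto simp: I'_def)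
        qed
      qed (use psubset.prems(3,4,5) sub fI' in auto)
      thus ?thesis using that by blast
    qed
    define \<sigma> where "\<sigma> \<rho> = S' (restrict \<rho> I')" for \<rho> :: "'i \<Rightarrow> real"
    define S where "S \<rho> = (\<sigma> \<rho>)(i := (\<rho> i - d i (\<sigma> \<rho>)) / c i (\<sigma> \<rho>))" for \<rho>
    have \<sigma>m: "\<sigma> \<in> PiM I (\<lambda>_. lborel) \<rightarrow>\<^sub>M PiM I' (\<lambda>_. lborel)"
      unfolding \<sigma>_def using measurable_comp[OF measurable_restrict_subset S'm] sub
      by (auto simp: comp_def)
    have hm: "(\<lambda>\<rho>. (\<rho> i - d i (\<sigma> \<rho>)) / c i (\<sigma> \<rho>)) \<in> borel_measurable (PiM I (\<lambda>_. lborel))"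
    proof -
      have 1: "(\<lambda>\<rho>. d i (\<sigma> \<rho>)) \<in> borel_measurable (PiM I (\<lambda>_. lborel))"
        using measurable_comp[OF \<sigma>m psubset.prems(5)[OF iI]] by (simp add: comp_def)
      have 2: "(\<lambda>\<rho>. c i (\<sigma> \<rho>)) \<in> borel_measurable (PiM I (\<lambda>_. lborel))"
        using measurable_comp[OF \<sigma>m psubset.prems(4)[OF iI]] by (simp add: comp_def)
      show ?thesis using 1 2 coord[of i I] by (intro borel_measurable_divide borel_measurable_diff)
    qed
    have Sm: "S \<in> PiM I (\<lambda>_. lborel) \<rightarrow>\<^sub>M PiM I (\<lambda>_. lborel)"
      unfolding S_def by (rule measurable_fun_upd[where J=I'])
        (use II' \<sigma>m hm in auto)
    show ?thesis
    proof (intro bexI[OF _ Sm] ballI)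
      fix \<rho> assume \<rho>: "\<rho> \<in> space (PiM I (\<lambda>_. lborel :: real measure))"
      have rs: "restrict \<rho> I' \<in> space (PiM I' (\<lambda>_. lborel :: real measure))"
        by (simp add: space_PiM)
      have T\<sigma>: "(\<lambda>j\<in>I'. c j (\<sigma> \<rho>) * \<sigma> \<rho> j + d j (\<sigma> \<rho>)) = restrict \<rho> I'"
        unfolding \<sigma>_def by (rule S'inv[OF rs])
      have cpos: "c i (\<sigma> \<rho>) > 0" using psubset.prems(3)[OF iI] .
      show "(\<lambda>j\<in>I. c j (S \<rho>) * S \<rho> j + d j (S \<rho>)) = \<rho>"
      proof
        fix j
        show "(\<lambda>j\<in>I. c j (S \<rho>) * S \<rho> j + d j (S \<rho>)) j = \<rho> j"
        proof (cases "j \<in> I")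
          case False
          then show ?thesis using \<rho> by (auto simp: space_PiM PiE_def extensional_def)
        next
          case True
          show ?thesis
          proof (cases "j = i")
            case True
            then show ?thesis using depI[OF iI, of "\<sigma> \<rho>"] cpos iI unfolding S_def by simp
          next
            case False
            hence jI': "j \<in> I'" using \<open>j \<in> I\<close> by (auto simp: I'_def)
            have "c j (\<sigma> \<rho>) * \<sigma> \<rho> j + d j (\<sigma> \<rho>) = \<rho> j"
              using fun_cong[OF T\<sigma>, of j] jI' by simp
            then show ?thesis using depI[OF \<open>j \<in> I\<close>, of "\<sigma> \<rho>"] False \<open>j \<in> I\<close> unfolding S_def by simp
          qed
        qed
      qed
    qed
  qed
qed

lemma beta_int1:
  fixes b :: real
  assumes b: "b > -1"
  shows "(\<integral>\<^sup>+x. indicator {-1<..<1} x * ennreal ((1 - x\<^sup>2) powr b) \<partial>lborel) = ennreal (Beta (b+1) (1/2))"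
proof -
  have "((\<lambda>t. t powr (-1 / 2) * (1 - t) powr b) has_integral
          Beta (1 / 2) (b + 1)) {0..1}"
    using has_integral_Beta_real[of "1/2" "b + 1"] b by simp
  from nn_integral_has_integral_lebesgue[OF _ this] have
     "ennreal (Beta (1 / 2) (b + 1)) =
        nn_integral lborel (\<lambda>t. ennreal (t powr (-1 / 2) * (1 - t) powr b *
                                indicator {0^2..1^2} t))"
    by (simp add: mult_ac ennreal_mult' ennreal_indicator)
  also have "\<dots> = (\<integral>\<^sup>+ x. ennreal (x\<^sup>2 powr - (1 / 2) * (1 - x\<^sup>2) powr b * (2 * x) *
                          indicator {0..1} x) \<partial>lborel)"
    by (subst nn_integral_substitution[where g = "\<lambda>x. x ^ 2" and g' = "\<lambda>x. 2 * x"])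
       (auto intro!: derivative_eq_intros continuous_intros simp: set_borel_measurable_def)
  also have "\<dots> = (\<integral>\<^sup>+ x. 2 * ennreal ((1 - x\<^sup>2) powr b * indicator {0..1} x) \<partial>lborel)"
    by (intro nn_integral_cong_AE AE_I[of _ _ "{0}"])
       (auto simp: indicator_def powr_minus powr_half_sqrt field_split_simps ennreal_mult')
  also have "\<dots> = (\<integral>\<^sup>+ x. ennreal ((1 - x\<^sup>2) powr b * indicator {0..1} x) \<partial>lborel) +
                    (\<integral>\<^sup>+ x. ennreal ((1 - x\<^sup>2) powr b * indicator {0..1} x) \<partial>lborel)"
    (is "_ = ?I + _") by (simp add: mult_2 nn_integral_add)
  also have "?I = (\<integral>\<^sup>+ x. ennreal ((1 - x\<^sup>2) powr b * indicator {-1..0} x) \<partial>lborel)"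
    by (subst nn_integral_real_affine[of _ "-1" 0])
       (auto simp: indicator_def intro!: nn_integral_cong)
  hence "?I + ?I = \<dots> + ?I" by simp
  also have "\<dots> = (\<integral>\<^sup>+ x. ennreal ((1 - x\<^sup>2) powr b *
                    (indicator {-1..0} x + indicator{0..1} x)) \<partial>lborel)"
    by (subst nn_integral_add [symmetric]) (auto simp: algebra_simps)
  also have "\<dots> = (\<integral>\<^sup>+ x. ennreal ((1 - x\<^sup>2) powr b * indicator {-1..1} x) \<partial>lborel)"
    by (intro nn_integral_cong_AE AE_I[of _ _ "{0}"]) (auto simp: indicator_def)
  also have "\<dots> = (\<integral>\<^sup>+x. indicator {-1<..<1} x * ennreal ((1 - x\<^sup>2) powr b) \<partial>lborel)"
  proof (intro nn_integral_cong)
    fix x :: real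
    have "x = -1 \<or> x = 1 \<Longrightarrow> (1 - x\<^sup>2) = 0" by auto
    thus "ennreal ((1 - x\<^sup>2) powr b * indicator {-1..1} x) = indicator {-1<..<1} x * ennreal ((1 - x\<^sup>2) powr b)"
      by (auto simp: indicator_def)
  qed
  finally show ?thesis by (simp add: Beta_commute)
qed

lemma beta_int_scaled:
  fixes b R :: real
  assumes b: "b > -1" and R: "R > 0"
  shows "(\<integral>\<^sup>+t. indicator {t. t\<^sup>2 < R} t * ennreal ((R - t\<^sup>2) powr b) \<partial>lborel)
         = ennreal (R powr (b + 1/2) * Beta (b+1) (1/2))"
proof -
  have sR: "sqrt R > 0" using R by simp
  have m: "(\<lambda>t. indicator {t. t\<^sup>2 < R} t * ennreal ((R - t\<^sup>2) powr b)) \<in> borel_measurable borel"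
    by (simp add: indicator_def)
  have "(\<integral>\<^sup>+t. indicator {t. t\<^sup>2 < R} t * ennreal ((R - t\<^sup>2) powr b) \<partial>lborel)
      = ennreal (sqrt R) * (\<integral>\<^sup>+x. indicator {t. t\<^sup>2 < R} (0 + sqrt R * x) * ennreal ((R - (0 + sqrt R * x)\<^sup>2) powr b) \<partial>lborel)"
    using nn_integral_real_affine[OF m, of "sqrt R" 0] sR by simp
  also have "(\<integral>\<^sup>+x. indicator {t. t\<^sup>2 < R} (0 + sqrt R * x) * ennreal ((R - (0 + sqrt R * x)\<^sup>2) powr b) \<partial>lborel)
      = (\<integral>\<^sup>+x. ennreal (R powr b) * (indicator {-1<..<1} x * ennreal ((1 - x\<^sup>2) powr b)) \<partial>lborel)"
  proof (intro nn_integral_cong)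
    fix x :: real
    have e1: "(sqrt R * x)\<^sup>2 = R * x\<^sup>2" using R by (simp add: power_mult_distrib)
    have e2: "(x\<^sup>2 < 1) = (x \<in> {-1<..<1})" by (auto simp: abs_square_less_1 abs_less_iff)
    have e3: "R - R * x\<^sup>2 = R * (1 - x\<^sup>2)" by (simp add: algebra_simps)
    show "indicator {t. t\<^sup>2 < R} (0 + sqrt R * x) * ennreal ((R - (0 + sqrt R * x)\<^sup>2) powr b)
        = ennreal (R powr b) * (indicator {-1<..<1} x * ennreal ((1 - x\<^sup>2) powr b))"
    proof (cases "x \<in> {-1<..<1}")
      case True
      hence "x\<^sup>2 < 1" using e2 by simp
      hence "R * x\<^sup>2 < R" using R by simp
      moreover have "1 - x\<^sup>2 > 0" using \<open>x\<^sup>2 < 1\<close> by simp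
      ultimately show ?thesis using True R
        by (simp add: e1 e3 indicator_def powr_mult ennreal_mult)
    next
      case False
      hence "\<not> x\<^sup>2 < 1" using e2 by simp
      hence "\<not> R * x\<^sup>2 < R" using R by simp
      thus ?thesis using False by (simp add: e1 indicator_def)
    qed
  qed
  also have "\<dots> = ennreal (R powr b) * ennreal (Beta (b+1) (1/2))"
    by (subst nn_integral_cmult) (auto simp: beta_int1[OF b])
  also have "ennreal (sqrt R) * (ennreal (R powr b) * ennreal (Beta (b+1) (1/2)))
      = ennreal (R powr (b + 1/2) * Beta (b+1) (1/2))"
  proof -
    have "Beta (b+1) (1/2) \<ge> 0" using b by (simp add: Beta_def Gamma_real_pos less_imp_le)
    moreover have "sqrt R * R powr b = R powr (b + 1/2)" using R
      by (simp add: powr_add powr_half_sqrt mult.commute)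
    ultimately show ?thesis using R
      by (simp add: ennreal_mult'[symmetric] ennreal_mult[symmetric] mult.assoc[symmetric])
  qed
  finally show ?thesis .
qed

lemma sumsq_meas:
  "(\<lambda>x. \<Sum>k\<in>K. (x k)\<^sup>2 :: real) \<in> borel_measurable (PiM J (\<lambda>_. lborel))"
  by (intro borel_measurable_sum borel_measurable_power measurable_coord_any)

lemma ball_integrand_meas:
  "(\<lambda>x. indicator {x. (\<Sum>k\<in>K. (x k)\<^sup>2) < 1} x * ennreal ((1 - (\<Sum>k\<in>K. (x k)\<^sup>2)) powr b))
     \<in> borel_measurable (PiM J (\<lambda>_. lborel))"
proof -
  have s[measurable]: "(\<lambda>x. \<Sum>k\<in>K. (x k)\<^sup>2 :: real) \<in> borel_measurable (PiM J (\<lambda>_. lborel))"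
    by (rule sumsq_meas)
  have e: "(\<lambda>x. indicator {x. (\<Sum>k\<in>K. (x k)\<^sup>2) < 1} x * ennreal ((1 - (\<Sum>k\<in>K. (x k)\<^sup>2)) powr b))
     = (\<lambda>x. if (\<Sum>k\<in>K. (x k)\<^sup>2) < 1 then ennreal ((1 - (\<Sum>k\<in>K. (x k)\<^sup>2)) powr b) else 0)"
    by (auto simp: indicator_def)
  show ?thesis unfolding e by measurable
qed

lemma ball_int:
  fixes K :: "'i set" and b :: real
  assumes "finite K" "b > -1"
  shows "(\<integral>\<^sup>+x. indicator {x. (\<Sum>k\<in>K. (x k)\<^sup>2) < 1} x * ennreal ((1 - (\<Sum>k\<in>K. (x k)\<^sup>2)) powr b)
            \<partial>PiM K (\<lambda>_. lborel)) = ennreal (\<Prod>i<card K. Beta (b + 1 + real i / 2) (1/2))"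
  using assms
proof (induction K arbitrary: b rule: finite_induct)
  case empty
  show ?case by (simp add: PiM_empty nn_integral_count_space_finite indicator_def)
next
  case (insert i K b)
  interpret product_sigma_finite "\<lambda>_. lborel::real measure" by standard
  define s where "s x = (\<Sum>k\<in>K. (x k)\<^sup>2)" for x :: "'i \<Rightarrow> real"
  have bB: "Beta (b+1) (1/2) \<ge> 0" using insert.prems by (simp add: Beta_def Gamma_real_pos less_imp_le)
  have "(\<integral>\<^sup>+x. indicator {x. (\<Sum>k\<in>insert i K. (x k)\<^sup>2) < 1} x * ennreal ((1 - (\<Sum>k\<in>insert i K. (x k)\<^sup>2)) powr b)
            \<partial>PiM (insert i K) (\<lambda>_. lborel))
      = (\<integral>\<^sup>+x. \<integral>\<^sup>+y. indicator {x. (\<Sum>k\<in>insert i K. (x k)\<^sup>2) < 1} (x(i:=y)) * ennreal ((1 - (\<Sum>k\<in>insert i K. ((x(i:=y)) k)\<^sup>2)) powr b) \<partial>lborel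
            \<partial>PiM K (\<lambda>_. lborel))"
    by (rule product_nn_integral_insert[OF insert.hyps ball_integrand_meas])
  also have "\<dots> = (\<integral>\<^sup>+x. indicator {x. s x < 1} x * ennreal ((1 - s x) powr (b + 1/2)) * ennreal (Beta (b+1) (1/2))
            \<partial>PiM K (\<lambda>_. lborel))"
  proof (rule nn_integral_cong)
    fix x :: "'i \<Rightarrow> real"
    have ss: "(\<Sum>k\<in>insert i K. ((x(i:=y)) k)\<^sup>2) = y\<^sup>2 + s x" for y
    proof -
      have "(\<Sum>k\<in>K. ((x(i:=y)) k)\<^sup>2) = s x" unfolding s_def using insert.hyps by (intro sum.cong) auto
      thus ?thesis using insert.hyps by simp
    qed
    have "(\<integral>\<^sup>+y. indicator {x. (\<Sum>k\<in>insert i K. (x k)\<^sup>2) < 1} (x(i:=y)) * ennreal ((1 - (\<Sum>k\<in>insert i K. ((x(i:=y)) k)\<^sup>2)) powr b) \<partial>lborel)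
        = (\<integral>\<^sup>+y. indicator {t. t\<^sup>2 < 1 - s x} y * ennreal (((1 - s x) - y\<^sup>2) powr b) \<partial>lborel)"
      by (intro nn_integral_cong) (simp only: indicator_def mem_Collect_eq ss, simp add: algebra_simps)
    also have "\<dots> = indicator {x. s x < 1} x * ennreal ((1 - s x) powr (b + 1/2)) * ennreal (Beta (b+1) (1/2))"
    proof (cases "s x < 1")
      case True
      then show ?thesis using beta_int_scaled[OF insert.prems, of "1 - s x"] bB
        by (simp add: ennreal_mult)
    next
      case False
      have z: "indicator {t. t\<^sup>2 < 1 - s x} y * ennreal (((1 - s x) - y\<^sup>2) powr b) = (0::ennreal)" for y :: real
      proof -
        have "\<not> y\<^sup>2 < 1 - s x" using False by (smt (verit) zero_le_power2)
        thus ?thesis by (simp add: indicator_def)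
      qed
      show ?thesis using False by (simp add: z)
    qed
    finally show "(\<integral>\<^sup>+y. indicator {x. (\<Sum>k\<in>insert i K. (x k)\<^sup>2) < 1} (x(i:=y)) * ennreal ((1 - (\<Sum>k\<in>insert i K. ((x(i:=y)) k)\<^sup>2)) powr b) \<partial>lborel)
        = indicator {x. s x < 1} x * ennreal ((1 - s x) powr (b + 1/2)) * ennreal (Beta (b+1) (1/2))" .
  qed
  also have "\<dots> = (\<integral>\<^sup>+x. indicator {x. s x < 1} x * ennreal ((1 - s x) powr (b + 1/2)) \<partial>PiM K (\<lambda>_. lborel)) * ennreal (Beta (b+1) (1/2))"
    by (rule nn_integral_multc) (unfold s_def, rule ball_integrand_meas)
  also have "(\<integral>\<^sup>+x. indicator {x. s x < 1} x * ennreal ((1 - s x) powr (b + 1/2)) \<partial>PiM K (\<lambda>_. lborel))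
      = ennreal (\<Prod>j<card K. Beta (b + 1/2 + 1 + real j / 2) (1/2))"
    unfolding s_def by (rule insert.IH) (use insert.prems in simp)
  also have "ennreal (\<Prod>j<card K. Beta (b + 1/2 + 1 + real j / 2) (1/2)) * ennreal (Beta (b+1) (1/2))
      = ennreal (\<Prod>j<card (insert i K). Beta (b + 1 + real j / 2) (1/2))"
  proof -
    have "(\<Prod>j<card (insert i K). Beta (b + 1 + real j / 2) (1/2))
        = Beta (b + 1) (1/2) * (\<Prod>j<card K. Beta (b + 1 + real (Suc j) / 2) (1/2))"
      by (simp only: card_insert_disjoint[OF insert.hyps] prod.lessThan_Suc_shift, simp)
    also have "(\<Prod>j<card K. Beta (b + 1 + real (Suc j) / 2) (1/2)) = (\<Prod>j<card K. Beta (b + 1/2 + 1 + real j / 2) (1/2))"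
      by (intro prod.cong) (auto simp: field_simps)
    finally have e: "(\<Prod>j<card (insert i K). Beta (b + 1 + real j / 2) (1/2)) = Beta (b + 1) (1/2) * (\<Prod>j<card K. Beta (b + 1/2 + 1 + real j / 2) (1/2))" .
    have "(\<Prod>j<card K. Beta (b + 1/2 + 1 + real j / 2) (1/2)) \<ge> 0"
      using insert.prems by (intro prod_nonneg) (simp add: Beta_def Gamma_real_pos less_imp_le)
    thus ?thesis unfolding e using bB by (simp add: ennreal_mult'[symmetric] mult.commute)
  qed
  finally show ?case .
qed

definition row_idx :: "nat \<Rightarrow> nat \<Rightarrow> (nat \<times> nat \<times> nat) set" where
  "row_idx \<beta> j = {(j', k, s). j' = j \<and> k < j \<and> s < \<beta>}"

definition rowsq :: "nat \<Rightarrow> (nat \<times> nat \<times> nat \<Rightarrow> real) \<Rightarrow> nat \<Rightarrow> real" where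
  "rowsq \<beta> w j = (\<Sum>i\<in>row_idx \<beta> j. (w i)\<^sup>2)"

lemma row_idx_eq: "row_idx \<beta> j = (\<lambda>(k, s). (j, k, s)) ` ({..<j} \<times> {..<\<beta>})"
  by (auto simp: row_idx_def image_iff)

lemma finite_row_idx[simp]: "finite (row_idx \<beta> j)"
  unfolding row_idx_eq by simp

lemma card_row_idx: "card (row_idx \<beta> j) = \<beta> * j"
proof -
  have "inj_on (\<lambda>(k, s). (j, k, s)) ({..<j} \<times> {..<\<beta>})" by (auto simp: inj_on_def)
  thus ?thesis unfolding row_idx_eq by (simp add: card_image card_cartesian_product)
qed

lemma corr_index_0: "corr_index \<beta> 0 = {}"
  by (auto simp: corr_index_def)

lemma corr_index_Suc: "corr_index \<beta> (Suc N) = corr_index \<beta> N \<union> row_idx \<beta> N"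
  by (auto simp: corr_index_def row_idx_def)

lemma corr_index_row_disj: "corr_index \<beta> N \<inter> row_idx \<beta> N = {}"
  by (auto simp: corr_index_def row_idx_def)

lemma row_idx_sub: "j < N \<Longrightarrow> row_idx \<beta> j \<subseteq> corr_index \<beta> N"
  by (auto simp: corr_index_def row_idx_def)

lemma finite_corr_index[simp]: "finite (corr_index \<beta> N)"
  by (induction N) (simp_all add: corr_index_0 corr_index_Suc)

lemma rows_int:
  fixes e :: "nat \<Rightarrow> real"
  assumes e: "\<And>j. e j > -1"
  shows "(\<integral>\<^sup>+w. (\<Prod>j<N. indicator {w. rowsq \<beta> w j < 1} w * ennreal ((1 - rowsq \<beta> w j) powr e j))
            \<partial>PiM (corr_index \<beta> N) (\<lambda>_. lborel))
         = ennreal (\<Prod>j<N. \<Prod>i<\<beta>*j. Beta (e j + 1 + real i / 2) (1/2))"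
proof (induction N)
  case 0
  show ?case by (simp add: corr_index_0 PiM_empty nn_integral_count_space_finite)
next
  case (Suc N)
  interpret product_sigma_finite "\<lambda>_. lborel::real measure" by standard
  define F where "F j w = indicator {w. rowsq \<beta> w j < 1} w * ennreal ((1 - rowsq \<beta> w j) powr e j)"
    for j and w :: "nat \<times> nat \<times> nat \<Rightarrow> real"
  have Fm: "F j \<in> borel_measurable (PiM J (\<lambda>_. lborel))" for j J
    unfolding F_def rowsq_def by (rule ball_integrand_meas)
  have Fdep: "F j w = F j w'" if "\<And>i. i \<in> row_idx \<beta> j \<Longrightarrow> w i = w' i" for j w w'
  proof -
    have "rowsq \<beta> w j = rowsq \<beta> w' j" unfolding rowsq_def using that by (intro sum.cong) auto
    thus ?thesis unfolding F_def by (simp add: indicator_def)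
  qed
  let ?I = "corr_index \<beta> N" and ?J = "row_idx \<beta> N"
  have m: "(\<lambda>w. \<Prod>j<Suc N. F j w) \<in> borel_measurable (PiM (?I \<union> ?J) (\<lambda>_. lborel))"
    by (intro borel_measurable_prod_ennreal Fm)
  have "(\<integral>\<^sup>+w. (\<Prod>j<Suc N. F j w) \<partial>PiM (corr_index \<beta> (Suc N)) (\<lambda>_. lborel))
      = (\<integral>\<^sup>+x. \<integral>\<^sup>+y. (\<Prod>j<Suc N. F j (merge ?I ?J (x, y))) \<partial>PiM ?J (\<lambda>_. lborel) \<partial>PiM ?I (\<lambda>_. lborel))"
    unfolding corr_index_Suc
    by (rule product_nn_integral_fold[OF corr_index_row_disj finite_corr_index finite_row_idx m])
  also have "\<dots> = (\<integral>\<^sup>+x. (\<Prod>j<N. F j x) * ennreal (\<Prod>i<\<beta>*N. Beta (e N + 1 + real i / 2) (1/2)) \<partial>PiM ?I (\<lambda>_. lborel))"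
  proof (rule nn_integral_cong)
    fix x assume x: "x \<in> space (PiM ?I (\<lambda>_. lborel :: real measure))"
    have "(\<Prod>j<Suc N. F j (merge ?I ?J (x, y))) = (\<Prod>j<N. F j x) * F N y" for y
    proof -
      have "F j (merge ?I ?J (x, y)) = F j x" if "j < N" for j
        using row_idx_sub[OF that] by (intro Fdep) (auto simp: merge_def)
      moreover have "F N (merge ?I ?J (x, y)) = F N y"
        using corr_index_row_disj[of \<beta> N] by (intro Fdep) (auto simp: merge_def)
      ultimately show ?thesis by simp
    qed
    hence "(\<integral>\<^sup>+y. (\<Prod>j<Suc N. F j (merge ?I ?J (x, y))) \<partial>PiM ?J (\<lambda>_. lborel))
        = (\<integral>\<^sup>+y. (\<Prod>j<N. F j x) * F N y \<partial>PiM ?J (\<lambda>_. lborel))" by simp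
    also have "\<dots> = (\<Prod>j<N. F j x) * (\<integral>\<^sup>+y. F N y \<partial>PiM ?J (\<lambda>_. lborel))"
      by (rule nn_integral_cmult) (rule Fm)
    also have "(\<integral>\<^sup>+y. F N y \<partial>PiM ?J (\<lambda>_. lborel)) = ennreal (\<Prod>i<\<beta>*N. Beta (e N + 1 + real i / 2) (1/2))"
      unfolding F_def rowsq_def using ball_int[OF finite_row_idx e[of N], of \<beta> N]
      by (simp add: card_row_idx)
    finally show "(\<integral>\<^sup>+y. (\<Prod>j<Suc N. F j (merge ?I ?J (x, y))) \<partial>PiM ?J (\<lambda>_. lborel))
        = (\<Prod>j<N. F j x) * ennreal (\<Prod>i<\<beta>*N. Beta (e N + 1 + real i / 2) (1/2))" .
  qed
  also have "\<dots> = (\<integral>\<^sup>+x. (\<Prod>j<N. F j x) \<partial>PiM ?I (\<lambda>_. lborel)) * ennreal (\<Prod>i<\<beta>*N. Beta (e N + 1 + real i / 2) (1/2))"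
    by (rule nn_integral_multc) (intro borel_measurable_prod_ennreal Fm)
  also have "(\<integral>\<^sup>+x. (\<Prod>j<N. F j x) \<partial>PiM ?I (\<lambda>_. lborel)) = ennreal (\<Prod>j<N. \<Prod>i<\<beta>*j. Beta (e j + 1 + real i / 2) (1/2))"
    using Suc.IH unfolding F_def .
  also have "ennreal (\<Prod>j<N. \<Prod>i<\<beta>*j. Beta (e j + 1 + real i / 2) (1/2)) * ennreal (\<Prod>i<\<beta>*N. Beta (e N + 1 + real i / 2) (1/2))
      = ennreal (\<Prod>j<Suc N. \<Prod>i<\<beta>*j. Beta (e j + 1 + real i / 2) (1/2))"
  proof -
    have nn: "0 \<le> Beta (e j + 1 + real i / 2) (1/2)" for j i
      using e[of j] by (simp add: Beta_def Gamma_real_pos less_imp_le)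
    have "(\<Prod>j<N. \<Prod>i<\<beta>*j. Beta (e j + 1 + real i / 2) (1/2)) \<ge> 0"
      by (intro prod_nonneg nn)
    moreover have "(\<Prod>i<\<beta>*N. Beta (e N + 1 + real i / 2) (1/2)) \<ge> 0"
      by (intro prod_nonneg nn)
    ultimately show ?thesis by (simp add: ennreal_mult'[symmetric])
  qed
  finally show ?case unfolding F_def .
qed

lemma Beta_half: "Beta u (1/2) = Gamma u * sqrt pi / Gamma (u + 1/2)"
  by (simp add: Beta_def Gamma_one_half_real)

lemma beta_telescope:
  fixes y :: real
  assumes y: "y + 1/2 > 0"
  shows "(\<Prod>t<m. Beta (y + (real t + 1) / 2) (1/2)) = pi powr (real m / 2) * Gamma (y + 1/2) / Gamma (y + (real m + 1) / 2)"
proof (induction m)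
  case 0
  have "Gamma (y + 1/2) > 0" by (rule Gamma_real_pos[OF y])
  hence "Gamma (y + 1/2) \<noteq> 0" by simp
  thus ?case by simp
next
  case (Suc m)
  have pos: "y + (real m + 1) / 2 > 0" using y by (simp add: field_simps) 
  have g: "Gamma (y + (real m + 1) / 2) \<noteq> 0" using Gamma_real_pos[OF pos] by simp
  have e1: "y + (real m + 1) / 2 + 1/2 = y + (real (Suc m) + 1) / 2" by (simp add: field_simps)
  have e2: "pi powr (real m / 2) * sqrt pi = pi powr (real (Suc m) / 2)"
  proof -
    have "real (Suc m) / 2 = real m / 2 + 1/2" by (simp add: field_simps)
    thus ?thesis by (simp only: powr_add powr_half_sqrt[OF pi_ge_zero])
  qed
  have "(\<Prod>t<Suc m. Beta (y + (real t + 1) / 2) (1/2))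
      = pi powr (real m / 2) * Gamma (y + 1/2) / Gamma (y + (real m + 1) / 2) * Beta (y + (real m + 1) / 2) (1/2)"
    by (simp add: Suc.IH)
  also have "\<dots> = (pi powr (real m / 2) * sqrt pi) * Gamma (y + 1/2) / Gamma (y + (real m + 1) / 2 + 1/2)"
    using g by (simp add: Beta_half)
  also have "\<dots> = pi powr (real (Suc m) / 2) * Gamma (y + 1/2) / Gamma (y + (real (Suc m) + 1) / 2)"
    by (simp only: e1 e2)
  finally show ?case .
qed

lemma ball_const:
  fixes b :: real
  assumes "b > -1"
  shows "(\<Prod>i<m. Beta (b + 1 + real i / 2) (1/2)) = pi powr (real m / 2) * Gamma (b + 1) / Gamma (b + 1 + real m / 2)"
proof -
  have "(\<Prod>i<m. Beta (b + 1 + real i / 2) (1/2)) = (\<Prod>t<m. Beta ((b + 1/2) + (real t + 1) / 2) (1/2))"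
    by (intro prod.cong refl arg_cong[where f="\<lambda>u. Beta u (1/2)"]) (simp add: field_simps)
  also have "\<dots> = pi powr (real m / 2) * Gamma (b + 1/2 + 1/2) / Gamma (b + 1/2 + (real m + 1) / 2)"
    by (rule beta_telescope) (use assms in simp)
  also have "b + 1/2 + 1/2 = b + 1" by simp
  also have "b + 1/2 + (real m + 1) / 2 = b + 1 + real m / 2" by (simp add: field_simps)
  finally show ?thesis .
qed

lemma beta_row:
  fixes a :: real and k \<beta> :: nat
  assumes a: "a > -1" and k: "k \<ge> 1"
  shows "(\<Prod>s<\<beta>. Beta (a + (real \<beta> * real k + 1 - real s) / 2) (1/2))
       = pi powr (real \<beta> / 2) * Gamma (a + real \<beta> * (real k - 1) / 2 + 1) / Gamma (a + real \<beta> * real k / 2 + 1)"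
proof -
  define y where "y = a + real \<beta> * (real k - 1) / 2 + 1/2"
  have "real \<beta> * (real k - 1) / 2 \<ge> 0" using k by simp
  hence y: "y + 1/2 > 0" using a unfolding y_def by linarith
  have "(\<Prod>s<\<beta>. Beta (a + (real \<beta> * real k + 1 - real s) / 2) (1/2))
      = (\<Prod>s<\<beta>. Beta (y + (real (\<beta> - Suc s) + 1) / 2) (1/2))"
  proof (intro prod.cong refl)
    fix s assume "s \<in> {..<\<beta>}"
    hence "real (\<beta> - Suc s) = real \<beta> - real s - 1" by (simp add: of_nat_diff)
    thus "Beta (a + (real \<beta> * real k + 1 - real s) / 2) (1/2) = Beta (y + (real (\<beta> - Suc s) + 1) / 2) (1/2)"
      by (intro arg_cong[where f="\<lambda>u. Beta u (1/2)"]) (simp add: y_def field_simps)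
  qed
  also have "\<dots> = (\<Prod>t<\<beta>. Beta (y + (real t + 1) / 2) (1/2))"
    by (rule prod.nat_diff_reindex)
  also have "\<dots> = pi powr (real \<beta> / 2) * Gamma (y + 1/2) / Gamma (y + (real \<beta> + 1) / 2)"
    by (rule beta_telescope[OF y])
  also have "y + 1/2 = a + real \<beta> * (real k - 1) / 2 + 1" by (simp add: y_def)
  also have "y + (real \<beta> + 1) / 2 = a + real \<beta> * real k / 2 + 1" by (simp add: y_def field_simps)
  finally show ?thesis .
qed

lemma claim2:
  fixes a :: real and \<beta> N :: nat
  assumes a: "a > -1"
  shows "(\<Prod>k=1..N-1. \<Prod>s<\<beta>. (Beta (a + (real \<beta> * real k + 1 - real s) / 2) (1/2 :: real)) ^ k)
         = (\<Prod>k=1..N-1. (pi powr (real \<beta> / 2) * Gamma (a + real \<beta> * (real k - 1) / 2 + 1)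
                          / Gamma (a + real \<beta> * real k / 2 + 1)) ^ k)"
proof (intro prod.cong refl)
  fix k assume "k \<in> {1..N-1}"
  hence k: "k \<ge> 1" by simp
  show "(\<Prod>s<\<beta>. (Beta (a + (real \<beta> * real k + 1 - real s) / 2) (1/2 :: real)) ^ k)
      = (pi powr (real \<beta> / 2) * Gamma (a + real \<beta> * (real k - 1) / 2 + 1) / Gamma (a + real \<beta> * real k / 2 + 1)) ^ k"
    unfolding prod_power_distrib[symmetric] using beta_row[OF a k, of \<beta>] by simp
qed

lemma claim3_aux:
  fixes a :: real and \<beta> M :: nat
  assumes a: "a > -1"
  shows "(\<Prod>k=1..M. (pi powr (real \<beta> / 2) * Gamma (a + real \<beta> * (real k - 1) / 2 + 1)
                          / Gamma (a + real \<beta> * real k / 2 + 1)) ^ k)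
         = pi powr (real \<beta> * real (M+1) * real M / 4)
           / (Gamma (a + real \<beta> / 2 * real M + 1)) ^ M
           * (\<Prod>k=1..M. Gamma (a + real \<beta> / 2 * (real k - 1) + 1))"
proof (induction M)
  case 0
  then show ?case by simp
next
  case (Suc M)
  define g where "g x = Gamma (a + real \<beta> / 2 * x + 1)" for x :: real
  have gpos: "x \<ge> 0 \<Longrightarrow> g x > 0" for x
    unfolding g_def using a by (intro Gamma_real_pos) (smt (verit) of_nat_0_le_iff zero_le_divide_iff zero_le_mult_iff)
  have e1: "Gamma (a + real \<beta> * (real k - 1) / 2 + 1) = g (real k - 1)" for k by (simp add: g_def)
  have e2: "Gamma (a + real \<beta> * real k / 2 + 1) = g (real k)" for k by (simp add: g_def)
  have e3: "Gamma (a + real \<beta> / 2 * (real k - 1) + 1) = g (real k - 1)" for k by (simp add: g_def)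
  have e4: "Gamma (a + real \<beta> / 2 * real k + 1) = g (real k)" for k by (simp add: g_def)
  note IH = Suc.IH[unfolded e1 e2 e3 e4]
  have gM: "g (real M) > 0" "g (real (Suc M)) > 0" using gpos by auto
  have pp: "pi powr (real \<beta> * real (M+1) * real M / 4) * (pi powr (real \<beta> / 2)) ^ Suc M
      = pi powr (real \<beta> * real (Suc M + 1) * real (Suc M) / 4)"
  proof -
    have eq: "real \<beta> * real (M+1) * real M / 4 + real (Suc M) * (real \<beta> / 2) = real \<beta> * real (Suc M + 1) * real (Suc M) / 4"
      by (simp add: field_simps)
    have pn: "pi \<noteq> 0" by simp
    show ?thesis by (simp only: powr_power[OF pn] powr_add[symmetric] eq)
  qed
  show ?case unfolding e1 e2 e3 e4
  proof -
    have "(\<Prod>k=1..Suc M. (pi powr (real \<beta> / 2) * g (real k - 1) / g (real k)) ^ k)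
        = (\<Prod>k=1..M. (pi powr (real \<beta> / 2) * g (real k - 1) / g (real k)) ^ k)
          * (pi powr (real \<beta> / 2) * g (real M) / g (real (Suc M))) ^ Suc M"
      by (simp add: prod.nat_ivl_Suc')
    also have "\<dots> = pi powr (real \<beta> * real (M+1) * real M / 4) / g (real M) ^ M
           * (\<Prod>k=1..M. g (real k - 1)) * (pi powr (real \<beta> / 2) * g (real M) / g (real (Suc M))) ^ Suc M"
      by (simp only: IH)
    also have "\<dots> = (pi powr (real \<beta> * real (M+1) * real M / 4) * (pi powr (real \<beta> / 2)) ^ Suc M)
           / g (real (Suc M)) ^ Suc M * ((\<Prod>k=1..M. g (real k - 1)) * g (real M))"
      using gM by (simp add: field_simps power_mult_distrib)
    also have "(\<Prod>k=1..M. g (real k - 1)) * g (real M) = (\<Prod>k=1..Suc M. g (real k - 1))"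
      by (simp add: prod.nat_ivl_Suc')
    finally show "(\<Prod>k=1..Suc M. (pi powr (real \<beta> / 2) * g (real k - 1) / g (real k)) ^ k)
        = pi powr (real \<beta> * real (Suc M + 1) * real (Suc M) / 4) / g (real (Suc M)) ^ Suc M * (\<Prod>k=1..Suc M. g (real k - 1))"
      by (simp only: pp)
  qed
qed

lemma claim3:
  fixes a :: real and \<beta> N :: nat
  assumes a: "a > -1" and N: "N \<ge> 1"
  shows "(\<Prod>k=1..N-1. (pi powr (real \<beta> / 2) * Gamma (a + real \<beta> * (real k - 1) / 2 + 1)
                          / Gamma (a + real \<beta> * real k / 2 + 1)) ^ k)
         = pi powr (real \<beta> * real N * (real N - 1) / 4)
           / (Gamma (a + real \<beta> / 2 * (real N - 1) + 1)) ^ (N - 1)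
           * (\<Prod>k=1..N-1. Gamma (a + real \<beta> / 2 * (real k - 1) + 1))"
proof -
  obtain M where M: "N = M + 1" using N by (metis add.commute le_Suc_ex)
  show ?thesis using claim3_aux[OF a, of \<beta> M] unfolding M by simp
qed

lemma sum_real_lessThan: "(\<Sum>j<N. real j) = real N * (real N - 1) / 2"
  by (induction N) (simp_all add: field_simps)

lemma int_value_eq:
  fixes a :: real and \<beta> N :: nat
  assumes a: "a > -1" and N: "N \<ge> 1"
  shows "(\<Prod>j<N. \<Prod>i<\<beta>*j. Beta (a + real \<beta> * (real N - 1 - real j) / 2 + 1 + real i / 2) (1/2))
       = pi powr (real \<beta> * real N * (real N - 1) / 4)
           / (Gamma (a + real \<beta> / 2 * (real N - 1) + 1)) ^ (N - 1)
           * (\<Prod>k=1..N-1. Gamma (a + real \<beta> / 2 * (real k - 1) + 1))"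
proof -
  obtain M where M: "N = Suc M" using N by (cases N) auto
  define f where "f k = Gamma (a + real \<beta> / 2 * real k + 1)" for k :: nat
  define G where "G = Gamma (a + real \<beta> / 2 * (real N - 1) + 1)"
  have fpos: "f k > 0" for k
  proof -
    have "real \<beta> / 2 * real k \<ge> 0" by simp
    thus ?thesis unfolding f_def using a by (intro Gamma_real_pos) linarith
  qed
  have GfM: "G = f M" unfolding G_def f_def M by simp
  have inner: "(\<Prod>i<\<beta>*j. Beta (a + real \<beta> * (real N - 1 - real j) / 2 + 1 + real i / 2) (1/2))
      = pi powr (real \<beta> * real j / 2) * f (N - Suc j) / G" if j: "j < N" for j
  proof -
    have ej: "a + real \<beta> * (real N - 1 - real j) / 2 > -1"
    proof -
      have "real N - 1 - real j \<ge> 0" using j by simp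
      hence "real \<beta> * (real N - 1 - real j) / 2 \<ge> 0" by simp
      thus ?thesis using a by linarith
    qed
    have rj: "real (N - Suc j) = real N - 1 - real j" using j by (simp add: of_nat_diff)
    show ?thesis
      unfolding ball_const[OF ej, of "\<beta>*j"]
      by (simp add: f_def G_def rj field_simps)
  qed
  have "(\<Prod>j<N. \<Prod>i<\<beta>*j. Beta (a + real \<beta> * (real N - 1 - real j) / 2 + 1 + real i / 2) (1/2))
      = (\<Prod>j<N. pi powr (real \<beta> * real j / 2) * f (N - Suc j) / G)"
    by (intro prod.cong refl inner) simp
  also have "\<dots> = (\<Prod>j<N. pi powr (real \<beta> * real j / 2)) * (\<Prod>j<N. f (N - Suc j)) / G ^ N"
    by (simp add: prod.distrib prod_dividef)
  also have "(\<Prod>j<N. pi powr (real \<beta> * real j / 2)) = pi powr (real \<beta> * real N * (real N - 1) / 4)"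
  proof -
    have "(\<Prod>j<N. pi powr (real \<beta> * real j / 2)) = pi powr (\<Sum>j<N. real \<beta> * real j / 2)"
      by (simp add: powr_sum)
    also have "(\<Sum>j<N. real \<beta> * real j / 2) = real \<beta> / 2 * (\<Sum>j<N. real j)"
      by (simp add: sum_distrib_left)
    also have "\<dots> = real \<beta> * real N * (real N - 1) / 4" by (simp add: sum_real_lessThan)
    finally show ?thesis .
  qed
  also have "(\<Prod>j<N. f (N - Suc j)) = (\<Prod>k<N. f k)"
    by (rule prod.nat_diff_reindex)
  also have "(\<Prod>k<N. f k) = (\<Prod>k=1..N-1. Gamma (a + real \<beta> / 2 * (real k - 1) + 1)) * G"
  proof -
    have "(\<Prod>k=1..N-1. Gamma (a + real \<beta> / 2 * (real k - 1) + 1)) = (\<Prod>k<M. f k)"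
      unfolding M by (simp add: prod.atLeast1_atMost_eq f_def)
    thus ?thesis unfolding M GfM by simp
  qed
  finally have X: "(\<Prod>j<N. \<Prod>i<\<beta>*j. Beta (a + real \<beta> * (real N - 1 - real j) / 2 + 1 + real i / 2) (1/2))
    = pi powr (real \<beta> * real N * (real N - 1) / 4) * ((\<Prod>k=1..N-1. Gamma (a + real \<beta> / 2 * (real k - 1) + 1)) * G) / G ^ N" .
  have alg: "p * (q * g) / g ^ Suc m = p / g ^ m * q" if "g \<noteq> 0" for p q g :: real and m
    using that by (simp add: field_simps)
  have "G \<noteq> 0" using fpos[of M] GfM by simp
  from X show ?thesis unfolding G_def[symmetric] using alg[OF \<open>G \<noteq> 0\<close>] unfolding M by simp
qed

definition gram :: "nat \<Rightarrow> (nat \<Rightarrow> nat \<Rightarrow> complex) \<Rightarrow> nat \<Rightarrow> nat \<Rightarrow> complex" where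
  "gram n L p q = (\<Sum>r<n. L p r * cnj (L q r))"

lemma hermitian_pd_cong:
  assumes "\<And>i j. i < n \<Longrightarrow> j < n \<Longrightarrow> M i j = M' i j"
  shows "hermitian_pd n M = hermitian_pd n M'"
proof -
  have e: "(\<Sum>i<n. \<Sum>j<n. cnj (v i) * M i j * v j) = (\<Sum>i<n. \<Sum>j<n. cnj (v i) * M' i j * v j)" for v
    by (intro sum.cong refl) (simp add: assms)
  have h: "(\<forall>i<n. \<forall>j<n. M i j = cnj (M j i)) = (\<forall>i<n. \<forall>j<n. M' i j = cnj (M' j i))"
    using assms by auto
  show ?thesis by (simp only: hermitian_pd_def h e)
qed

lemma cdet_cong:
  assumes "\<And>i j. i < n \<Longrightarrow> j < n \<Longrightarrow> M i j = M' i j"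
  shows "cdet n M = cdet n M'"
  unfolding cdet_def
proof (intro sum.cong refl)
  fix p assume "p \<in> {p. p permutes {..<n}}"
  hence p: "p permutes {..<n}" by simp
  show "of_int (sign p) * (\<Prod>i<n. M i (p i)) = of_int (sign p) * (\<Prod>i<n. M' i (p i))"
  proof -
    have "(\<Prod>i<n. M i (p i)) = (\<Prod>i<n. M' i (p i))"
      by (rule prod.cong) (use assms permutes_in_image[OF p] in auto)
    thus ?thesis by simp
  qed
qed

lemma gram_herm: "gram n L q p = cnj (gram n L p q)"
  by (simp add: gram_def mult.commute)

lemma quad_gram:
  "(\<Sum>i<n. \<Sum>j<n. cnj (v i) * gram n L i j * v j)
     = (\<Sum>r<n. (\<Sum>i<n. cnj (v i) * L i r) * cnj (\<Sum>i<n. cnj (v i) * L i r))"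
proof -
  have "(\<Sum>i<n. \<Sum>j<n. cnj (v i) * gram n L i j * v j)
      = (\<Sum>i<n. \<Sum>j<n. \<Sum>r<n. (cnj (v i) * L i r) * (cnj (L j r) * v j))"
    unfolding gram_def by (simp add: sum_distrib_left sum_distrib_right mult.assoc)
  also have "\<dots> = (\<Sum>r<n. \<Sum>i<n. \<Sum>j<n. (cnj (v i) * L i r) * (cnj (L j r) * v j))"
  proof -
    have "(\<Sum>i<n. \<Sum>j<n. \<Sum>r<n. (cnj (v i) * L i r) * (cnj (L j r) * v j))
        = (\<Sum>i<n. \<Sum>r<n. \<Sum>j<n. (cnj (v i) * L i r) * (cnj (L j r) * v j))"
      by (rule sum.cong[OF refl], rule sum.swap)
    also have "\<dots> = (\<Sum>r<n. \<Sum>i<n. \<Sum>j<n. (cnj (v i) * L i r) * (cnj (L j r) * v j))"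
      by (rule sum.swap)
    finally show ?thesis .
  qed
  also have "\<dots> = (\<Sum>r<n. (\<Sum>i<n. cnj (v i) * L i r) * (\<Sum>j<n. cnj (L j r) * v j))"
    by (simp add: sum_product)
  also have "\<dots> = (\<Sum>r<n. (\<Sum>i<n. cnj (v i) * L i r) * cnj (\<Sum>i<n. cnj (v i) * L i r))"
    by (simp add: mult.commute)
  finally show ?thesis .
qed

lemma sum_single_nz:
  fixes f :: "nat \<Rightarrow> 'a::comm_monoid_add"
  assumes "i \<in> A" "finite A" "\<And>j. j \<in> A \<Longrightarrow> j \<noteq> i \<Longrightarrow> f j = 0"
  shows "sum f A = f i"
proof -
  have "sum f A = f i + sum f (A - {i})" using assms by (simp add: sum.remove)
  also have "sum f (A - {i}) = 0" using assms by (intro sum.neutral) auto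
  finally show ?thesis by simp
qed

lemma lower_inj:
  fixes L :: "nat \<Rightarrow> nat \<Rightarrow> complex"
  assumes low: "\<And>i r. i < r \<Longrightarrow> L i r = 0" and diag: "\<And>r. r < n \<Longrightarrow> L r r \<noteq> 0"
    and u: "\<And>r. r < n \<Longrightarrow> (\<Sum>i<n. cnj (v i) * L i r) = 0"
  shows "\<forall>i<n. v i = 0"
proof -
  have "\<forall>i. n - k \<le> i \<longrightarrow> i < n \<longrightarrow> v i = 0" for k
  proof (induction k)
    case 0 then show ?case by auto
  next
    case (Suc k)
    show ?case
    proof (intro allI impI)
      fix i assume i: "n - Suc k \<le> i" "i < n"
      show "v i = 0"
      proof (cases "n - k \<le> i")
        case True then show ?thesis using Suc.IH i by auto
      next
        case False
        have "(\<Sum>i'<n. cnj (v i') * L i' i) = cnj (v i) * L i i"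
        proof (rule sum_single_nz)
          fix j assume j: "j \<in> {..<n}" "j \<noteq> i"
          show "cnj (v j) * L j i = 0"
          proof (cases "j < i")
            case True then show ?thesis using low by simp
          next
            case False
            hence "n - k \<le> j" using j i False \<open>\<not> n - k \<le> i\<close> by linarith
            then show ?thesis using Suc.IH j by auto
          qed
        qed (use i in auto)
        with u[OF i(2)] diag[OF i(2)] show ?thesis by simp
      qed
    qed
  qed
  from this[of n] show ?thesis by auto
qed

lemma gram_pd:
  fixes L :: "nat \<Rightarrow> nat \<Rightarrow> complex"
  assumes low: "\<And>i r. i < r \<Longrightarrow> L i r = 0" and diag: "\<And>r. r < n \<Longrightarrow> L r r \<noteq> 0"
  shows "hermitian_pd n (gram n L)"
  unfolding hermitian_pd_def
proof (intro conjI allI impI)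
  fix i j assume "i < n" "j < n"
  show "gram n L i j = cnj (gram n L j i)" by (simp add: gram_herm[of n L i j])
next
  fix v :: "nat \<Rightarrow> complex" assume v: "\<exists>i<n. v i \<noteq> 0"
  define u where "u r = (\<Sum>i<n. cnj (v i) * L i r)" for r
  have q: "Re (\<Sum>i<n. \<Sum>j<n. cnj (v i) * gram n L i j * v j) = (\<Sum>r<n. (cmod (u r))\<^sup>2)"
    unfolding quad_gram u_def[symmetric] by (simp add: complex_mult_cnj cmod_def)
  have "\<not> (\<forall>r<n. u r = 0)"
  proof
    assume "\<forall>r<n. u r = 0"
    hence "\<forall>i<n. v i = 0"
      using lower_inj[where L=L and n=n and v=v] low diag unfolding u_def by blast
    thus False using v by blast
  qed
  then obtain r where r: "r < n" "u r \<noteq> 0" by blast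
  have "0 < (cmod (u r))\<^sup>2" using r by simp
  also have "\<dots> \<le> (\<Sum>r<n. (cmod (u r))\<^sup>2)"
    by (rule member_le_sum) (use r in auto)
  finally show "0 < Re (\<Sum>i<n. \<Sum>j<n. cnj (v i) * gram n L i j * v j)" unfolding q .
qed

primrec bsub :: "(nat \<Rightarrow> nat \<Rightarrow> complex) \<Rightarrow> (nat \<Rightarrow> real) \<Rightarrow> nat \<Rightarrow> nat \<Rightarrow> nat \<Rightarrow> complex" where
  "bsub L d q 0 = (\<lambda>i. if i = q then 1 else 0)"
| "bsub L d q (Suc t) = (bsub L d q t)(q - Suc t :=
      - cnj (\<Sum>i\<in>{q - Suc t<..q}. cnj (bsub L d q t i) * L i (q - Suc t)) / of_real (d (q - Suc t)))"

lemma bsub_props: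
  fixes L :: "nat \<Rightarrow> nat \<Rightarrow> complex"
  assumes diag: "\<And>r. L r r = of_real (d r)" and dpos: "\<And>r. d r > 0"
  shows "t \<le> q \<Longrightarrow> (\<forall>i. q < i \<longrightarrow> bsub L d q t i = 0) \<and> bsub L d q t q = 1 \<and>
     (\<forall>r. q - t \<le> r \<and> r < q \<longrightarrow> (\<Sum>i\<in>{r..q}. cnj (bsub L d q t i) * L i r) = 0)"
proof (induction t)
  case 0 then show ?case by auto
next
  case (Suc t)
  define v where "v = bsub L d q t"
  define r0 where "r0 = q - Suc t"
  define X where "X = (\<Sum>i\<in>{r0<..q}. cnj (v i) * L i r0)"
  have r0q: "r0 < q" using Suc.prems by (simp add: r0_def)
  have IH: "(\<forall>i. q < i \<longrightarrow> v i = 0) \<and> v q = 1 \<and>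
     (\<forall>r. q - t \<le> r \<and> r < q \<longrightarrow> (\<Sum>i\<in>{r..q}. cnj (v i) * L i r) = 0)"
    using Suc by (simp add: v_def)
  have bs: "bsub L d q (Suc t) = v(r0 := - cnj X / of_real (d r0))"
    by (simp add: v_def r0_def X_def)
  have dn: "(of_real (d r0) :: complex) \<noteq> 0" using dpos[of r0] by simp
  show ?case unfolding bs
  proof (intro conjI allI impI)
    fix i assume "q < i" thus "(v(r0 := - cnj X / of_real (d r0))) i = 0" using IH r0q by auto
  next
    show "(v(r0 := - cnj X / of_real (d r0))) q = 1" using IH r0q by auto
  next
    fix r assume r: "q - Suc t \<le> r \<and> r < q"
    show "(\<Sum>i\<in>{r..q}. cnj ((v(r0 := - cnj X / of_real (d r0))) i) * L i r) = 0"
    proof (cases "r = r0")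
      case False
      hence "q - t \<le> r" using r by (auto simp: r0_def)
      moreover have "(\<Sum>i\<in>{r..q}. cnj ((v(r0 := - cnj X / of_real (d r0))) i) * L i r)
          = (\<Sum>i\<in>{r..q}. cnj (v i) * L i r)"
        using False r by (intro sum.cong refl) (auto simp: r0_def)
      ultimately show ?thesis using IH r by auto
    next
      case True
      have "{r0..q} = insert r0 {r0<..q}" using r0q by auto
      hence "(\<Sum>i\<in>{r..q}. cnj ((v(r0 := - cnj X / of_real (d r0))) i) * L i r)
          = cnj (- cnj X / of_real (d r0)) * L r0 r0 + (\<Sum>i\<in>{r0<..q}. cnj ((v(r0 := - cnj X / of_real (d r0))) i) * L i r0)"
        using True by simp
      also have "(\<Sum>i\<in>{r0<..q}. cnj ((v(r0 := - cnj X / of_real (d r0))) i) * L i r0) = X"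
        unfolding X_def by (intro sum.cong refl) auto
      also have "cnj (- cnj X / of_real (d r0)) * L r0 r0 = - X"
        using dn by (simp add: diag)
      finally show ?thesis by simp
    qed
  qed
qed

lemma gram_not_pd:
  fixes L :: "nat \<Rightarrow> nat \<Rightarrow> complex" and d \<delta> :: "nat \<Rightarrow> real"
  assumes low: "\<And>i r. i < r \<Longrightarrow> L i r = 0" and diag: "\<And>r. L r r = of_real (d r)" and dpos: "\<And>r. d r > 0"
    and q: "q < n" and \<delta>0: "\<And>r. r < q \<Longrightarrow> \<delta> r = 0" and bad: "(d q)\<^sup>2 + \<delta> q \<le> 0"
  shows "\<not> hermitian_pd n (\<lambda>i j. gram n L i j + (if i = j then of_real (\<delta> i) else 0))"
proof
  assume pd: "hermitian_pd n (\<lambda>i j. gram n L i j + (if i = j then of_real (\<delta> i) else 0))"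
  define v where "v = bsub L d q q"
  have P: "(\<forall>i. q < i \<longrightarrow> v i = 0) \<and> v q = 1 \<and>
     (\<forall>r. r < q \<longrightarrow> (\<Sum>i\<in>{r..q}. cnj (v i) * L i r) = 0)"
    using bsub_props[where L=L and d=d and q=q and t=q, OF diag dpos] by (simp add: v_def)
  define u where "u r = (\<Sum>i<n. cnj (v i) * L i r)" for r
  have ur: "u r = (\<Sum>i\<in>{r..q}. cnj (v i) * L i r)" for r
    unfolding u_def
  proof (rule sum.mono_neutral_right)
    show "{r..q} \<subseteq> {..<n}" using q by auto
    show "\<forall>i\<in>{..<n} - {r..q}. cnj (v i) * L i r = 0"
      using P low by auto
  qed auto
  have u_small: "u r = 0" if "r < q" for r using P ur that by auto
  have u_big: "u r = 0" if "q < r" for r using ur that by simp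
  have u_q: "u q = of_real (d q)" using ur P diag by simp
  have quad: "(\<Sum>i<n. \<Sum>j<n. cnj (v i) * (gram n L i j + (if i = j then of_real (\<delta> i) else 0)) * v j)
      = (\<Sum>r<n. u r * cnj (u r)) + (\<Sum>i<n. cnj (v i) * of_real (\<delta> i) * v i)"
  proof -
    have "(\<Sum>i<n. \<Sum>j<n. cnj (v i) * (gram n L i j + (if i = j then of_real (\<delta> i) else 0)) * v j)
        = (\<Sum>i<n. \<Sum>j<n. cnj (v i) * gram n L i j * v j) + (\<Sum>i<n. \<Sum>j<n. cnj (v i) * (if i = j then of_real (\<delta> i) else 0) * v j)"
      by (simp add: distrib_left distrib_right sum.distrib)
    also have "(\<Sum>i<n. \<Sum>j<n. cnj (v i) * (if i = j then of_real (\<delta> i) else 0) * v j) = (\<Sum>i<n. cnj (v i) * of_real (\<delta> i) * v i)"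
    proof (intro sum.cong refl)
      fix i assume i: "i \<in> {..<n}"
      have "(\<Sum>j<n. cnj (v i) * (if i = j then of_real (\<delta> i) else 0) * v j)
          = (\<Sum>j<n. if i = j then cnj (v i) * of_real (\<delta> i) * v i else 0)"
        by (intro sum.cong) auto
      also have "\<dots> = cnj (v i) * of_real (\<delta> i) * v i" using i by simp
      finally show "(\<Sum>j<n. cnj (v i) * (if i = j then of_real (\<delta> i) else 0) * v j) = cnj (v i) * of_real (\<delta> i) * v i" .
    qed
    finally show ?thesis unfolding quad_gram u_def[symmetric] .
  qed
  have s1: "(\<Sum>r<n. u r * cnj (u r)) = of_real ((d q)\<^sup>2)"
  proof -
    have "(\<Sum>r<n. u r * cnj (u r)) = u q * cnj (u q)"
      by (rule sum_single_nz) (use q u_small u_big in \<open>auto simp: neq_iff\<close>)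
    thus ?thesis using u_q by (simp add: power2_eq_square)
  qed
  have s2: "(\<Sum>i<n. cnj (v i) * of_real (\<delta> i) * v i) = of_real (\<delta> q)"
  proof -
    have "(\<Sum>i<n. cnj (v i) * of_real (\<delta> i) * v i) = cnj (v q) * of_real (\<delta> q) * v q"
      by (rule sum_single_nz) (use q P \<delta>0 in \<open>auto simp: neq_iff\<close>)
    thus ?thesis using P by simp
  qed
  have "0 < Re (\<Sum>i<n. \<Sum>j<n. cnj (v i) * (gram n L i j + (if i = j then of_real (\<delta> i) else 0)) * v j)"
  proof -
    have pos: "\<forall>v. (\<exists>i<n. v i \<noteq> 0) \<longrightarrow> 0 < Re (\<Sum>i<n. \<Sum>j<n. cnj (v i) * (gram n L i j + (if i = j then of_real (\<delta> i) else 0)) * v j)"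
      using pd unfolding hermitian_pd_def by (rule conjunct2)
    have "\<exists>i<n. v i \<noteq> 0" using q P by auto
    from pos[rule_format, OF this] show ?thesis .
  qed
  also have "\<dots> = (d q)\<^sup>2 + \<delta> q" unfolding quad s1 s2 by simp
  finally show False using bad by simp
qed

lemma cdet_det: "cdet n M = det (mat n n (\<lambda>(i, j). M i j))"
proof -
  have "det (mat n n (\<lambda>(i, j). M i j)) = (\<Sum>p\<in>{p. p permutes {0..<n}}. signof p * (\<Prod>i=0..<n. mat n n (\<lambda>(i, j). M i j) $$ (i, p i)))"
    by (rule det_def') simp
  also have "\<dots> = (\<Sum>p\<in>{p. p permutes {..<n}}. of_int (sign p) * (\<Prod>i<n. M i (p i)))"
  proof (intro sum.cong)
    show "{p. p permutes {0..<n}} = {p. p permutes {..<n}}" by (simp add: atLeast0LessThan)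
  next
    fix p assume "p \<in> {p. p permutes {..<n}}"
    hence p: "p permutes {..<n}" by simp
    have "(\<Prod>i=0..<n. mat n n (\<lambda>(i, j). M i j) $$ (i, p i)) = (\<Prod>i<n. M i (p i))"
      by (simp only: atLeast0LessThan, rule prod.cong) (use permutes_in_image[OF p] in auto)
    thus "signof p * (\<Prod>i=0..<n. mat n n (\<lambda>(i, j). M i j) $$ (i, p i)) = of_int (sign p) * (\<Prod>i<n. M i (p i))"
      by simp
  qed
  finally show ?thesis unfolding cdet_def by simp
qed

lemma prod_list_diag: "A \<in> carrier_mat n n \<Longrightarrow> prod_list (diag_mat A) = (\<Prod>i<n. A $$ (i, i))"
  unfolding diag_mat_def using prod.distinct_set_conv_list[of "[0..<n]" "\<lambda>i. A $$ (i, i)"]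
  by (simp add: atLeast0LessThan)

lemma cdet_gram:
  fixes L :: "nat \<Rightarrow> nat \<Rightarrow> complex"
  assumes low: "\<And>i r. i < r \<Longrightarrow> L i r = 0"
  shows "cdet n (gram n L) = (\<Prod>i<n. L i i * cnj (L i i))"
proof -
  define A where "A = mat n n (\<lambda>(i, j). L i j)"
  define B where "B = mat n n (\<lambda>(i, j). cnj (L j i))"
  have AB: "mat n n (\<lambda>(i, j). gram n L i j) = A * B"
  proof (rule eq_matI)
    fix i j assume "i < dim_row (A * B)" "j < dim_col (A * B)"
    hence ij: "i < n" "j < n" by (auto simp: A_def B_def)
    show "mat n n (\<lambda>(i, j). gram n L i j) $$ (i, j) = (A * B) $$ (i, j)"
      using ij by (simp add: A_def B_def gram_def scalar_prod_def atLeast0LessThan)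
  qed (auto simp: A_def B_def)
  have A: "A \<in> carrier_mat n n" and B: "B \<in> carrier_mat n n" by (auto simp: A_def B_def)
  have dA: "det A = (\<Prod>i<n. L i i)"
    using det_lower_triangular[OF _ A] prod_list_diag[OF A] low by (simp add: A_def)
  have uB: "upper_triangular B" unfolding upper_triangular_def B_def using low by simp
  have dB: "det B = (\<Prod>i<n. cnj (L i i))"
    using det_upper_triangular[OF uB B] prod_list_diag[OF B] by (simp add: B_def)
  show ?thesis
    unfolding cdet_det AB det_mult[OF A B] dA dB by (simp add: prod.distrib)
qed

definition rowof :: "nat \<Rightarrow> nat \<Rightarrow> nat" where "rowof \<beta> p = (if \<beta> = 4 then p div 2 else p)"
definition colst :: "nat \<Rightarrow> nat \<Rightarrow> nat" where "colst \<beta> k = (if \<beta> = 4 then 2 * k else k)"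
definition Eent :: "nat \<Rightarrow> (nat \<times> nat \<times> nat \<Rightarrow> real) \<Rightarrow> nat \<Rightarrow> nat \<Rightarrow> complex" where
  "Eent \<beta> w p q = (if \<beta> = 4 then low_block w (p div 2) (q div 2) (p mod 2) (q mod 2) else low_entry \<beta> w p q)"
definition cc :: "nat \<Rightarrow> (nat \<times> nat \<times> nat \<Rightarrow> real) \<Rightarrow> nat \<Rightarrow> real" where
  "cc \<beta> w j = (if rowsq \<beta> w j < 1 then sqrt (1 - rowsq \<beta> w j) else 1)"
definition Lam :: "nat \<Rightarrow> (nat \<times> nat \<times> nat \<Rightarrow> real) \<Rightarrow> nat \<Rightarrow> nat \<Rightarrow> complex" where
  "Lam \<beta> w p q = (if rowof \<beta> q < rowof \<beta> p then Eent \<beta> w p q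
      else if p = q then complex_of_real (cc \<beta> w (rowof \<beta> p)) else 0)"
definition Ssum :: "nat \<Rightarrow> (nat \<times> nat \<times> nat \<Rightarrow> real) \<Rightarrow> nat \<Rightarrow> nat \<Rightarrow> complex" where
  "Ssum \<beta> w p q = (\<Sum>r<colst \<beta> (rowof \<beta> q). Eent \<beta> w p r * cnj (Eent \<beta> w q r))"
definition compo :: "nat \<Rightarrow> complex \<Rightarrow> real" where "compo s z = (if even s then Re z else Im z)"
definition dco :: "nat \<Rightarrow> (nat \<times> nat \<times> nat \<Rightarrow> real) \<Rightarrow> nat \<times> nat \<times> nat \<Rightarrow> real" where
  "dco \<beta> w i = (case i of (j, k, s) \<Rightarrow> compo s (Ssum \<beta> w (colst \<beta> j) (colst \<beta> k + s div 2)))"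
definition Tmap :: "nat \<Rightarrow> nat \<Rightarrow> (nat \<times> nat \<times> nat \<Rightarrow> real) \<Rightarrow> nat \<times> nat \<times> nat \<Rightarrow> real" where
  "Tmap \<beta> N w = (\<lambda>i\<in>corr_index \<beta> N. cc \<beta> w (fst (snd i)) * w i + dco \<beta> w i)"
definition dlt :: "nat \<Rightarrow> (nat \<times> nat \<times> nat \<Rightarrow> real) \<Rightarrow> nat \<Rightarrow> real" where
  "dlt \<beta> w p = 1 - rowsq \<beta> w (rowof \<beta> p) - (cc \<beta> w (rowof \<beta> p))\<^sup>2"

lemma cc_pos: "cc \<beta> w j > 0"
  by (simp add: cc_def)

lemma cc_sq: "rowsq \<beta> w j < 1 \<Longrightarrow> (cc \<beta> w j)\<^sup>2 = 1 - rowsq \<beta> w j"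
  by (simp add: cc_def)

lemma rowof_mono: "p \<le> q \<Longrightarrow> rowof \<beta> p \<le> rowof \<beta> q"
  by (simp add: rowof_def div_le_mono)

lemma lt_colst: "r < colst \<beta> k \<longleftrightarrow> rowof \<beta> r < k"
  by (auto simp: rowof_def colst_def)

lemma colst_rowof: "colst \<beta> (rowof \<beta> q) \<le> q"
  by (simp add: rowof_def colst_def)

lemma Lam_low: "i < r \<Longrightarrow> Lam \<beta> w i r = 0"
  using rowof_mono[of i r \<beta>] by (auto simp: Lam_def)

lemma Lam_diag: "Lam \<beta> w r r = of_real (cc \<beta> w (rowof \<beta> r))"
  by (simp add: Lam_def)

lemma gram_split:
  assumes "rowof \<beta> q \<le> rowof \<beta> p" "q < n"
  shows "gram n (Lam \<beta> w) p q = Ssum \<beta> w p q + Lam \<beta> w p q * of_real (cc \<beta> w (rowof \<beta> q))"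
proof -
  define c0 where "c0 = colst \<beta> (rowof \<beta> q)"
  have c0q: "c0 \<le> q" unfolding c0_def by (rule colst_rowof)
  have sub: "{..<c0} \<subseteq> {..<n}" using c0q assms by auto
  have "gram n (Lam \<beta> w) p q = (\<Sum>r\<in>{..<n} - {..<c0}. Lam \<beta> w p r * cnj (Lam \<beta> w q r))
        + (\<Sum>r<c0. Lam \<beta> w p r * cnj (Lam \<beta> w q r))"
    unfolding gram_def by (rule sum.subset_diff[OF sub]) simp
  also have "(\<Sum>r<c0. Lam \<beta> w p r * cnj (Lam \<beta> w q r)) = Ssum \<beta> w p q"
    unfolding Ssum_def c0_def[symmetric]
  proof (intro sum.cong refl)
    fix r assume "r \<in> {..<c0}"
    hence "rowof \<beta> r < rowof \<beta> q" unfolding c0_def by (simp add: lt_colst)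
    thus "Lam \<beta> w p r * cnj (Lam \<beta> w q r) = Eent \<beta> w p r * cnj (Eent \<beta> w q r)"
      using assms(1) by (simp add: Lam_def)
  qed
  also have "(\<Sum>r\<in>{..<n} - {..<c0}. Lam \<beta> w p r * cnj (Lam \<beta> w q r))
      = (\<Sum>r\<in>{..<n} - {..<c0}. if r = q then Lam \<beta> w p q * of_real (cc \<beta> w (rowof \<beta> q)) else 0)"
  proof (intro sum.cong refl)
    fix r assume "r \<in> {..<n} - {..<c0}"
    hence "\<not> r < c0" by simp
    hence "\<not> rowof \<beta> r < rowof \<beta> q" unfolding c0_def lt_colst .
    thus "Lam \<beta> w p r * cnj (Lam \<beta> w q r) = (if r = q then Lam \<beta> w p q * of_real (cc \<beta> w (rowof \<beta> q)) else 0)"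
      by (auto simp: Lam_def[of \<beta> w q r])
  qed
  also have "\<dots> = Lam \<beta> w p q * of_real (cc \<beta> w (rowof \<beta> q))"
    using c0q assms by simp
  finally show ?thesis by simp
qed

lemma rowsq_eq: "rowsq \<beta> w j = (\<Sum>k<j. \<Sum>s<\<beta>. (w (j, k, s))\<^sup>2)"
proof -
  have inj: "inj_on (\<lambda>(k, s). (j, k, s)) ({..<j} \<times> {..<\<beta>})" by (auto simp: inj_on_def)
  have "rowsq \<beta> w j = (\<Sum>x\<in>{..<j} \<times> {..<\<beta>}. (w ((\<lambda>(k, s). (j, k, s)) x))\<^sup>2)"
    unfolding rowsq_def row_idx_eq by (subst sum.reindex[OF inj]) (simp add: comp_def)
  also have "\<dots> = (\<Sum>k<j. \<Sum>s<\<beta>. (w (j, k, s))\<^sup>2)"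
    by (simp add: sum.cartesian_product case_prod_unfold)
  finally show ?thesis .
qed

lemma sum_pairs: "(\<Sum>r<2*j. f r) = (\<Sum>m<j. f (2*m) + f (2*m+1))" for j :: nat and f :: "nat \<Rightarrow> 'a::comm_monoid_add"
  by (induction j) (simp_all add: algebra_simps)

lemma prod_pairs: "(\<Prod>r<2*j. f r) = (\<Prod>m<j. f (2*m) * f (2*m+1))" for j :: nat and f :: "nat \<Rightarrow> 'a::comm_monoid_mult"
  by (induction j) (simp_all add: algebra_simps)

lemma Ssum_diag:
  assumes "\<beta> \<in> {1, 2, 4}"
  shows "Ssum \<beta> w p p = of_real (rowsq \<beta> w (rowof \<beta> p))"
proof -
  consider "\<beta> = 1" | "\<beta> = 2" | "\<beta> = 4" using assms by auto
  then show ?thesis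
  proof cases
    case 1
    have "Ssum \<beta> w p p = (\<Sum>r<p. of_real ((w (p, r, 0))\<^sup>2))"
      unfolding Ssum_def by (intro sum.cong) (simp_all add: 1 rowof_def colst_def Eent_def low_entry_def complex_mult_cnj)
    thus ?thesis by (simp add: rowsq_eq 1 rowof_def)
  next
    case 2
    have "Ssum \<beta> w p p = (\<Sum>r<p. of_real ((w (p, r, 0))\<^sup>2 + (w (p, r, 1))\<^sup>2))"
      unfolding Ssum_def by (intro sum.cong) (simp_all add: 2 rowof_def colst_def Eent_def low_entry_def complex_mult_cnj)
    moreover have "{..<2::nat} = {0, 1}" by auto
    ultimately show ?thesis by (simp add: rowsq_eq 2 rowof_def)
  next
    case 3
    define j where "j = p div 2"
    define a where "a = p mod 2"
    have a: "a < 2" by (simp add: a_def)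
    have "Ssum \<beta> w p p = (\<Sum>r<2*j. Eent 4 w p r * cnj (Eent 4 w p r))"
      unfolding Ssum_def by (simp add: 3 rowof_def colst_def j_def)
    also have "\<dots> = (\<Sum>m<j. of_real ((w (j, m, 0))\<^sup>2 + (w (j, m, 1))\<^sup>2 + (w (j, m, 2))\<^sup>2 + (w (j, m, 3))\<^sup>2))"
      unfolding sum_pairs
    proof (intro sum.cong refl)
      fix m :: nat
      have d1: "(2 * m) div 2 = m" "(2 * m) mod 2 = 0" "(2 * m + 1) div 2 = m" "(2 * m + 1) mod 2 = 1" by auto
      show "Eent 4 w p (2 * m) * cnj (Eent 4 w p (2 * m)) + Eent 4 w p (2 * m + 1) * cnj (Eent 4 w p (2 * m + 1))
          = of_real ((w (j, m, 0))\<^sup>2 + (w (j, m, 1))\<^sup>2 + (w (j, m, 2))\<^sup>2 + (w (j, m, 3))\<^sup>2)"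
        using a unfolding Eent_def d1 j_def[symmetric] a_def[symmetric]
        by (cases "a = 0") (auto simp: low_block_def Let_def complex_mult_cnj algebra_simps)
    qed
    also have "\<dots> = of_real (rowsq \<beta> w (rowof \<beta> p))"
    proof -
      have "{..<4::nat} = {0, 1, 2, 3}" by auto
      thus ?thesis by (simp add: rowsq_eq 3 rowof_def j_def add.assoc)
    qed
    finally show ?thesis .
  qed
qed

lemma Ssum_real1: "Im (Ssum 1 w p q) = 0"
  unfolding Ssum_def by (simp add: Eent_def low_entry_def)

lemma Ssum4_eq:
  assumes "a < 2" "b < 2"
  shows "Ssum 4 w (2*j + a) (2*k + b) = (\<Sum>m<k. low_block w j m a 0 * cnj (low_block w k m b 0) + low_block w j m a 1 * cnj (low_block w k m b 1))"
proof -
  have r: "rowof 4 (2*k + b) = k" using assms by (simp add: rowof_def)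
  have d: "(2*j + a) div 2 = j" "(2*j + a) mod 2 = a" "(2*k + b) div 2 = k" "(2*k + b) mod 2 = b"
    using assms by auto
  have d1: "(2 * m) div 2 = m" "(2 * m) mod 2 = 0" "(2 * m + 1) div 2 = m" "(2 * m + 1) mod 2 = 1" for m :: nat by auto
  have m: "a mod 2 = a" "b mod 2 = b" using assms by auto
  show ?thesis unfolding Ssum_def r by (simp add: colst_def sum_pairs Eent_def d d1 m)
qed

lemma Ssum4_Q1: "Ssum 4 w (2*j + 1) (2*k + 1) = cnj (Ssum 4 w (2*j) (2*k))"
  using Ssum4_eq[of 1 1 w j k] Ssum4_eq[of 0 0 w j k]
  by (simp add: low_block_def Let_def ac_simps)

lemma Ssum4_Q2: "Ssum 4 w (2*j + 1) (2*k) = - cnj (Ssum 4 w (2*j) (2*k + 1))"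
  using Ssum4_eq[of 1 0 w j k] Ssum4_eq[of 0 1 w j k]
  by (simp add: low_block_def Let_def sum_negf[symmetric] algebra_simps)

lemma Ssum4_Q3: "Ssum 4 w (2*j) (2*j + 1) = 0"
  using Ssum4_eq[of 0 1 w j j] by (simp add: low_block_def Let_def algebra_simps)

lemma Tmap_val: "(j, k, s) \<in> corr_index \<beta> N \<Longrightarrow>
  Tmap \<beta> N w (j, k, s) = cc \<beta> w k * w (j, k, s) + compo s (Ssum \<beta> w (colst \<beta> j) (colst \<beta> k + s div 2))"
  by (simp add: Tmap_def dco_def)

lemma corr_mat_herm: "corr_mat \<beta> N x p q = cnj (corr_mat \<beta> N x q p)"
  by (auto simp: corr_mat_def Let_def)

lemma corr_mat_diag: "corr_mat \<beta> N x p p = 1"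
  by (simp add: corr_mat_def Let_def)

lemma corr_mat_lower:
  assumes \<beta>: "\<beta> \<in> {1, 2, 4}" and p: "p < corr_size \<beta> N" and pq: "rowof \<beta> q < rowof \<beta> p"
  shows "corr_mat \<beta> N (Tmap \<beta> N w) p q = gram (corr_size \<beta> N) (Lam \<beta> w) p q"
proof -
  let ?n = "corr_size \<beta> N"
  have qp: "q < p"
  proof (rule ccontr)
    assume "\<not> q < p"
    hence "p \<le> q" by simp
    from rowof_mono[OF this, of \<beta>] pq show False by simp
  qed
  have gs: "gram ?n (Lam \<beta> w) p q = Ssum \<beta> w p q + Eent \<beta> w p q * of_real (cc \<beta> w (rowof \<beta> q))"
    using gram_split[of \<beta> q p ?n w] pq qp p by (simp add: Lam_def)
  show ?thesis
  proof (cases "\<beta> = 4")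
    case False
    hence b12: "\<beta> = 1 \<or> \<beta> = 2" using \<beta> by auto
    have pN: "p < N" using p False by (simp add: corr_size_def)
    have in0: "(p, q, 0) \<in> corr_index \<beta> N" using pN qp b12 by (auto simp: corr_index_def)
    have T0: "Tmap \<beta> N w (p, q, 0) = cc \<beta> w q * w (p, q, 0) + Re (Ssum \<beta> w p q)"
      using Tmap_val[OF in0] False by (simp add: colst_def compo_def)
    have cm: "corr_mat \<beta> N (Tmap \<beta> N w) p q = low_entry \<beta> (Tmap \<beta> N w) p q"
      using qp False by (simp add: corr_mat_def)
    show ?thesis
    proof (cases "\<beta> = 2")
      case True
      have in1: "(p, q, 1) \<in> corr_index \<beta> N" using pN qp True by (auto simp: corr_index_def)
      have T1: "Tmap \<beta> N w (p, q, 1) = cc \<beta> w q * w (p, q, 1) + Im (Ssum \<beta> w p q)"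
        using Tmap_val[OF in1] False by (simp add: colst_def compo_def)
      show ?thesis unfolding cm gs using T0 T1 True
        by (simp add: low_entry_def Eent_def rowof_def complex_eq_iff algebra_simps)
    next
      case False
      hence b1: "\<beta> = 1" using b12 by simp
      show ?thesis unfolding cm gs using T0 b1 Ssum_real1[of w p q]
        by (simp add: low_entry_def Eent_def rowof_def complex_eq_iff algebra_simps)
    qed
  next
    case True
    define j where "j = p div 2"
    define a where "a = p mod 2"
    define k where "k = q div 2"
    define b where "b = q mod 2"
    have pj: "p = 2*j + a" and qk: "q = 2*k + b" by (simp_all add: j_def a_def k_def b_def)
    have a: "a < 2" and b: "b < 2" by (simp_all add: a_def b_def)
    have kj: "k < j" using pq True by (simp add: rowof_def j_def k_def)
    have jN: "j < N" using p True by (simp add: corr_size_def j_def)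
    have ins: "(j, k, s) \<in> corr_index 4 N" if "s < 4" for s using kj jN that by (auto simp: corr_index_def)
    have T: "Tmap 4 N w (j, k, s) = cc 4 w k * w (j, k, s) + compo s (Ssum 4 w (2*j) (2*k + s div 2))" if "s < 4" for s
      using Tmap_val[OF ins[OF that]] by (simp add: colst_def)
    have T0: "Tmap 4 N w (j, k, 0) = cc 4 w k * w (j, k, 0) + Re (Ssum 4 w (2*j) (2*k))"
      using T[of 0] by (simp add: compo_def)
    have T1: "Tmap 4 N w (j, k, 1) = cc 4 w k * w (j, k, 1) + Im (Ssum 4 w (2*j) (2*k))"
      using T[of 1] by (simp add: compo_def)
    have T2: "Tmap 4 N w (j, k, 2) = cc 4 w k * w (j, k, 2) + Re (Ssum 4 w (2*j) (2*k+1))"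
      using T[of 2] by (simp add: compo_def)
    have T3: "Tmap 4 N w (j, k, 3) = cc 4 w k * w (j, k, 3) + Im (Ssum 4 w (2*j) (2*k+1))"
      using T[of 3] by (simp add: compo_def)
    have cm: "corr_mat \<beta> N (Tmap \<beta> N w) p q = low_block (Tmap 4 N w) j k a b"
      using kj True by (simp add: corr_mat_def Let_def j_def k_def a_def b_def)
    have E: "Eent \<beta> w p q = low_block w j k a b" using True by (simp add: Eent_def j_def k_def a_def b_def)
    have rq: "rowof \<beta> q = k" using True by (simp add: rowof_def k_def)
    have Q1: "Ssum 4 w (2*j + 1) (2*k + 1) = cnj (Ssum 4 w (2*j) (2*k))" by (rule Ssum4_Q1)
    have Q2: "Ssum 4 w (2*j + 1) (2*k) = - cnj (Ssum 4 w (2*j) (2*k + 1))" by (rule Ssum4_Q2)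
    have "a = 0 \<or> a = 1" "b = 0 \<or> b = 1" using a b by auto
    hence key: "low_block (Tmap 4 N w) j k a b = Ssum 4 w (2*j+a) (2*k+b) + low_block w j k a b * of_real (cc 4 w k)"
      using T0 T1 T2 T3 Q1 Q2
      by (auto simp: low_block_def Let_def complex_eq_iff algebra_simps)
    show ?thesis unfolding cm gs E rq using key True pj qk by simp
  qed
qed

lemma corr_mat_T:
  assumes \<beta>: "\<beta> \<in> {1, 2, 4}" and p: "p < corr_size \<beta> N" and q: "q < corr_size \<beta> N"
  shows "corr_mat \<beta> N (Tmap \<beta> N w) p q = gram (corr_size \<beta> N) (Lam \<beta> w) p q + (if p = q then of_real (dlt \<beta> w p) else 0)"
proof -
  let ?n = "corr_size \<beta> N"
  consider "rowof \<beta> q < rowof \<beta> p" | "rowof \<beta> p < rowof \<beta> q" | "p = q" | "rowof \<beta> p = rowof \<beta> q" "p \<noteq> q"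
    by linarith
  then show ?thesis
  proof cases
    case 1
    hence "p \<noteq> q" by auto
    thus ?thesis using corr_mat_lower[OF \<beta> p 1] by simp
  next
    case 2
    hence "p \<noteq> q" by auto
    have "corr_mat \<beta> N (Tmap \<beta> N w) p q = cnj (corr_mat \<beta> N (Tmap \<beta> N w) q p)" by (rule corr_mat_herm)
    also have "\<dots> = cnj (gram ?n (Lam \<beta> w) q p)" using corr_mat_lower[OF \<beta> q 2] by simp
    also have "\<dots> = gram ?n (Lam \<beta> w) p q" by (simp add: gram_herm[of ?n _ q p])
    finally show ?thesis using \<open>p \<noteq> q\<close> by simp
  next
    case 3
    have "gram ?n (Lam \<beta> w) p p = Ssum \<beta> w p p + Lam \<beta> w p p * of_real (cc \<beta> w (rowof \<beta> p))"
      using gram_split[of \<beta> p p ?n w] p by simp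
    also have "\<dots> = of_real (rowsq \<beta> w (rowof \<beta> p) + (cc \<beta> w (rowof \<beta> p))\<^sup>2)"
      using Ssum_diag[OF \<beta>] by (simp add: Lam_diag power2_eq_square)
    finally show ?thesis using 3 by (simp add: corr_mat_diag dlt_def)
  next
    case 4
    hence b4: "\<beta> = 4" by (cases "\<beta> = 4") (auto simp: rowof_def)
    define j where "j = p div 2"
    have e1: "p = 2*j + p mod 2" unfolding j_def by simp
    have e2: "q = 2*j + q mod 2" using 4 b4 unfolding j_def rowof_def by simp
    have pm: "p mod 2 \<noteq> q mod 2" using e1 e2 4 by metis
    have cm: "corr_mat \<beta> N (Tmap \<beta> N w) p q = 0"
      using 4 b4 pm by (auto simp: corr_mat_def Let_def rowof_def)
    note pm
    moreover have "p mod 2 = 0 \<or> p mod 2 = 1" "q mod 2 = 0 \<or> q mod 2 = 1" by auto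
    ultimately have pq: "(p = 2*j \<and> q = 2*j + 1) \<or> (p = 2*j + 1 \<and> q = 2*j)"
      using e1 e2 by auto
    have "gram ?n (Lam \<beta> w) p q = Ssum \<beta> w p q + Lam \<beta> w p q * of_real (cc \<beta> w (rowof \<beta> q))"
      using gram_split[of \<beta> q p ?n w] q 4 by simp
    also have "Lam \<beta> w p q = 0" using 4 by (simp add: Lam_def)
    also have "Ssum \<beta> w p q = 0"
      using pq Ssum4_Q3[of w j] Ssum4_Q2[of w j j] b4 by auto
    finally show ?thesis using cm 4 by simp
  qed
qed

lemma rowof_colst: "rowof \<beta> (colst \<beta> j) = j"
  by (simp add: rowof_def colst_def)

lemma rowof_lt: "\<beta> \<in> {1, 2, 4} \<Longrightarrow> p < corr_size \<beta> N \<Longrightarrow> rowof \<beta> p < N"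
  by (auto simp: rowof_def corr_size_def)

lemma colst_lt: "\<beta> \<in> {1, 2, 4} \<Longrightarrow> j < N \<Longrightarrow> colst \<beta> j < corr_size \<beta> N"
  by (auto simp: colst_def corr_size_def)

lemma corr_mat_T_good:
  assumes \<beta>: "\<beta> \<in> {1, 2, 4}" and good: "\<forall>j<N. rowsq \<beta> w j < 1"
    and p: "p < corr_size \<beta> N" and q: "q < corr_size \<beta> N"
  shows "corr_mat \<beta> N (Tmap \<beta> N w) p q = gram (corr_size \<beta> N) (Lam \<beta> w) p q"
proof -
  have "dlt \<beta> w p = 0" using good rowof_lt[OF \<beta> p] cc_sq by (simp add: dlt_def)
  thus ?thesis using corr_mat_T[OF \<beta> p q, of w] by (cases "p = q") simp_all
qed

lemma Tmap_good_in:
  assumes \<beta>: "\<beta> \<in> {1, 2, 4}" and good: "\<forall>j<N. rowsq \<beta> w j < 1"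
  shows "Tmap \<beta> N w \<in> corr_set \<beta> N"
proof -
  have "hermitian_pd (corr_size \<beta> N) (gram (corr_size \<beta> N) (Lam \<beta> w))"
    by (rule gram_pd) (simp_all add: Lam_low Lam_diag cc_pos[THEN less_imp_neq, THEN not_sym])
  thus ?thesis unfolding corr_set_def
    using hermitian_pd_cong[of "corr_size \<beta> N" "corr_mat \<beta> N (Tmap \<beta> N w)" "gram (corr_size \<beta> N) (Lam \<beta> w)"]
      corr_mat_T_good[OF \<beta> good] by simp
qed

lemma Tmap_good_det:
  assumes \<beta>: "\<beta> \<in> {1, 2, 4}" and good: "\<forall>j<N. rowsq \<beta> w j < 1"
  shows "corr_det \<beta> N (Tmap \<beta> N w) = (\<Prod>j<N. 1 - rowsq \<beta> w j)"
proof -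
  let ?n = "corr_size \<beta> N"
  have "cdet ?n (corr_mat \<beta> N (Tmap \<beta> N w)) = cdet ?n (gram ?n (Lam \<beta> w))"
    by (rule cdet_cong) (rule corr_mat_T_good[OF \<beta> good])
  also have "\<dots> = (\<Prod>p<?n. Lam \<beta> w p p * cnj (Lam \<beta> w p p))"
    by (rule cdet_gram) (rule Lam_low)
  also have "\<dots> = (\<Prod>p<?n. of_real (1 - rowsq \<beta> w (rowof \<beta> p)))"
  proof (intro prod.cong refl)
    fix p assume "p \<in> {..<?n}"
    hence "rowof \<beta> p < N" using rowof_lt[OF \<beta>] by simp
    hence h: "(cc \<beta> w (rowof \<beta> p))\<^sup>2 = 1 - rowsq \<beta> w (rowof \<beta> p)" using good cc_sq by simp
    have "Lam \<beta> w p p * cnj (Lam \<beta> w p p) = of_real ((cc \<beta> w (rowof \<beta> p))\<^sup>2)"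
      by (simp add: Lam_diag power2_eq_square)
    also have "\<dots> = of_real (1 - rowsq \<beta> w (rowof \<beta> p))" by (simp only: h)
    finally show "Lam \<beta> w p p * cnj (Lam \<beta> w p p) = of_real (1 - rowsq \<beta> w (rowof \<beta> p))" .
  qed
  finally have cd: "cdet ?n (corr_mat \<beta> N (Tmap \<beta> N w)) = (\<Prod>p<?n. of_real (1 - rowsq \<beta> w (rowof \<beta> p)))" .
  have nn: "(\<Prod>j<N. 1 - rowsq \<beta> w j) \<ge> 0" using good by (intro prod_nonneg) auto
  show ?thesis
  proof (cases "\<beta> = 4")
    case False
    have e: "(\<Prod>p<?n. (of_real (1 - rowsq \<beta> w (rowof \<beta> p)) :: complex)) = of_real (\<Prod>j<N. 1 - rowsq \<beta> w j)"
      using False by (simp only: corr_size_def rowof_def if_False of_real_prod)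
    have "Re (cdet ?n (corr_mat \<beta> N (Tmap \<beta> N w))) = (\<Prod>j<N. 1 - rowsq \<beta> w j)"
      unfolding cd e by (simp only: Re_complex_of_real)
    thus ?thesis using False by (simp add: corr_det_def Let_def)
  next
    case True
    have "(\<Prod>p<?n. (of_real (1 - rowsq \<beta> w (rowof \<beta> p)) :: complex)) = (\<Prod>m<N. of_real ((1 - rowsq \<beta> w m) * (1 - rowsq \<beta> w m)))"
      using True by (simp add: corr_size_def rowof_def prod_pairs)
    also have "\<dots> = of_real ((\<Prod>j<N. 1 - rowsq \<beta> w j)\<^sup>2)"
      by (simp only: power2_eq_square of_real_mult of_real_prod prod.distrib)
    finally have "Re (cdet ?n (corr_mat \<beta> N (Tmap \<beta> N w))) = (\<Prod>j<N. 1 - rowsq \<beta> w j)\<^sup>2"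
      unfolding cd by (simp only: Re_complex_of_real)
    thus ?thesis using True nn by (simp add: corr_det_def Let_def)
  qed
qed

lemma Tmap_bad_notin:
  assumes \<beta>: "\<beta> \<in> {1, 2, 4}" and bad: "\<not> (\<forall>j<N. rowsq \<beta> w j < 1)"
  shows "Tmap \<beta> N w \<notin> corr_set \<beta> N"
proof
  assume inset: "Tmap \<beta> N w \<in> corr_set \<beta> N"
  let ?n = "corr_size \<beta> N"
  have "\<exists>j. j < N \<and> \<not> rowsq \<beta> w j < 1" using bad by auto
  then obtain j0 where j0: "j0 < N" "\<not> rowsq \<beta> w j0 < 1" and least: "\<And>j. j < j0 \<Longrightarrow> rowsq \<beta> w j < 1"
    using exists_least_iff[of "\<lambda>j. j < N \<and> \<not> rowsq \<beta> w j < 1"] by (metis less_trans)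
  define q where "q = colst \<beta> j0"
  have q: "q < ?n" unfolding q_def by (rule colst_lt[OF \<beta> j0(1)])
  have rq: "rowof \<beta> q = j0" by (simp add: q_def rowof_colst)
  have npd: "\<not> hermitian_pd ?n (\<lambda>i j. gram ?n (Lam \<beta> w) i j + (if i = j then of_real (dlt \<beta> w i) else 0))"
  proof (rule gram_not_pd[where d="\<lambda>r. cc \<beta> w (rowof \<beta> r)"])
    show "\<And>i r. i < r \<Longrightarrow> Lam \<beta> w i r = 0" by (rule Lam_low)
    show "\<And>r. Lam \<beta> w r r = of_real (cc \<beta> w (rowof \<beta> r))" by (rule Lam_diag)
    show "\<And>r. cc \<beta> w (rowof \<beta> r) > 0" by (rule cc_pos)
    show "q < ?n" by (rule q)
    show "dlt \<beta> w r = 0" if "r < q" for r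
    proof -
      have "rowof \<beta> r < j0" using that unfolding q_def by (simp add: lt_colst[symmetric])
      thus ?thesis using least cc_sq by (simp add: dlt_def)
    qed
    show "(cc \<beta> w (rowof \<beta> q))\<^sup>2 + dlt \<beta> w q \<le> 0"
      using j0 by (simp add: dlt_def rq)
  qed
  have "hermitian_pd ?n (corr_mat \<beta> N (Tmap \<beta> N w))" using inset by (simp add: corr_set_def)
  hence "hermitian_pd ?n (\<lambda>i j. gram ?n (Lam \<beta> w) i j + (if i = j then of_real (dlt \<beta> w i) else 0))"
    using hermitian_pd_cong[of ?n "corr_mat \<beta> N (Tmap \<beta> N w)"] corr_mat_T[OF \<beta>] by simp
  with npd show False by simp
qed

definition rk :: "nat \<Rightarrow> nat \<times> nat \<times> nat \<Rightarrow> nat" where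
  "rk N i = (case i of (j, k, s) \<Rightarrow> (k * N + j) * 4 + s)"

lemma div_mod_4: "s < 4 \<Longrightarrow> (x * 4 + s) div 4 = x \<and> (x * 4 + s) mod 4 = (s::nat)"
  by simp

lemma inj_rk: "\<beta> \<in> {1, 2, 4} \<Longrightarrow> inj_on (rk N) (corr_index \<beta> N)"
proof (rule inj_onI)
  fix x y assume b: "\<beta> \<in> {1, 2, 4}" and x: "x \<in> corr_index \<beta> N" and y: "y \<in> corr_index \<beta> N"
    and e: "rk N x = rk N y"
  obtain j k s where xe: "x = (j, k, s)" by (cases x) auto
  obtain j' k' s' where ye: "y = (j', k', s')" by (cases y) auto
  have lt: "j < N" "j' < N" "s < 4" "s' < 4" using x y b by (auto simp: xe ye corr_index_def)
  have e': "(k * N + j) * 4 + s = (k' * N + j') * 4 + s'" using e by (simp add: rk_def xe ye)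
  have m1: "((k * N + j) * 4 + s) mod 4 = s" "((k * N + j) * 4 + s) div 4 = k * N + j"
    using div_mod_4[OF lt(3), of "k * N + j"] by auto
  have m2: "((k' * N + j') * 4 + s') mod 4 = s'" "((k' * N + j') * 4 + s') div 4 = k' * N + j'"
    using div_mod_4[OF lt(4), of "k' * N + j'"] by auto
  have "s = s'" using m1 m2 e' by metis
  moreover have 1: "k * N + j = k' * N + j'" using m1 m2 e' by metis
  moreover have "j = j'"
  proof -
    have "(k * N + j) mod N = j" "(k' * N + j') mod N = j'" using lt by simp_all
    thus ?thesis using 1 by metis
  qed
  moreover have "k = k'"
  proof -
    have "(k * N + j) div N = k" "(k' * N + j') div N = k'" using lt by simp_all
    thus ?thesis using 1 by metis
  qed
  ultimately show "x = y" by (simp add: xe ye)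
qed

lemma rk_less: "m < k \<Longrightarrow> j' < N \<Longrightarrow> s' < 4 \<Longrightarrow> rk N (j', m, s') < rk N (j, k, s)"
proof -
  assume a: "m < k" "j' < N" "s' < 4"
  have "(m * N + j') * 4 + s' < (m * N + N) * 4" using a by simp
  also have "\<dots> = (Suc m * N) * 4" by simp
  also have "\<dots> \<le> (k * N + j) * 4 + s"
  proof -
    have "Suc m * N \<le> k * N" using a by (rule_tac mult_le_mono1) simp
    hence "(Suc m * N) * 4 \<le> (k * N) * 4" by (rule mult_le_mono1)
    thus ?thesis by (simp add: algebra_simps)
  qed
  finally show ?thesis by (simp add: rk_def)
qed

lemma Eent_cong:
  assumes b: "\<beta> \<in> {1, 2, 4}" and h: "\<And>s'. s' < \<beta> \<Longrightarrow> w (rowof \<beta> p, rowof \<beta> r, s') = w' (rowof \<beta> p, rowof \<beta> r, s')"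
  shows "Eent \<beta> w p r = Eent \<beta> w' p r"
proof -
  consider "\<beta> = 1" | "\<beta> = 2" | "\<beta> = 4" using b by auto
  then show ?thesis
  proof cases
    case 1 then show ?thesis using h[of 0] by (simp add: Eent_def low_entry_def rowof_def)
  next
    case 2 then show ?thesis using h[of 0] h[of 1] by (simp add: Eent_def low_entry_def rowof_def)
  next
    case 3 then show ?thesis using h[of 0] h[of 1] h[of 2] h[of 3] by (simp add: Eent_def low_block_def rowof_def Let_def)
  qed
qed

lemma dep_cd:
  assumes b: "\<beta> \<in> {1, 2, 4}" and i: "(j, k, s) \<in> corr_index \<beta> N"
    and h: "\<And>i'. i' \<in> corr_index \<beta> N \<Longrightarrow> rk N i' < rk N (j, k, s) \<Longrightarrow> w i' = w' i'"
  shows "cc \<beta> w k = cc \<beta> w' k \<and> dco \<beta> w (j, k, s) = dco \<beta> w' (j, k, s)"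
proof -
  have kj: "k < j" "j < N" "s < \<beta>" using i by (auto simp: corr_index_def)
  have b4: "\<beta> \<le> 4" using b by auto
  have P: "w (j', m, s') = w' (j', m, s')" if "j' < N" "m < k" "m < j'" "s' < \<beta>" for j' m s'
  proof (rule h)
    show "(j', m, s') \<in> corr_index \<beta> N" using that by (auto simp: corr_index_def)
    show "rk N (j', m, s') < rk N (j, k, s)" using that b4 by (intro rk_less) auto
  qed
  have "rowsq \<beta> w k = rowsq \<beta> w' k"
    unfolding rowsq_eq using P kj by (intro sum.cong refl) auto
  hence c: "cc \<beta> w k = cc \<beta> w' k" by (simp add: cc_def)
  have rr: "rowof \<beta> (colst \<beta> k + s div 2) = k" using kj b by (auto simp: rowof_def colst_def)
  have E: "Eent \<beta> w p r = Eent \<beta> w' p r" if "rowof \<beta> p = j \<or> rowof \<beta> p = k" "r < colst \<beta> k" for p r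
  proof (rule Eent_cong[OF b])
    fix s' assume "s' < \<beta>"
    moreover have "rowof \<beta> r < k" using that(2) by (simp add: lt_colst)
    ultimately show "w (rowof \<beta> p, rowof \<beta> r, s') = w' (rowof \<beta> p, rowof \<beta> r, s')"
      using that(1) kj by (intro P) auto
  qed
  have "Ssum \<beta> w (colst \<beta> j) (colst \<beta> k + s div 2) = Ssum \<beta> w' (colst \<beta> j) (colst \<beta> k + s div 2)"
    unfolding Ssum_def rr
  proof (intro sum.cong refl)
    fix r assume "r \<in> {..<colst \<beta> k}"
    hence r: "r < colst \<beta> k" by simp
    show "Eent \<beta> w (colst \<beta> j) r * cnj (Eent \<beta> w (colst \<beta> k + s div 2) r)
        = Eent \<beta> w' (colst \<beta> j) r * cnj (Eent \<beta> w' (colst \<beta> k + s div 2) r)"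
      using E[OF _ r, of "colst \<beta> j"] E[OF _ r, of "colst \<beta> k + s div 2"] rr
      by (simp add: rowof_colst)
  qed
  hence "dco \<beta> w (j, k, s) = dco \<beta> w' (j, k, s)" by (simp add: dco_def)
  with c show ?thesis by simp
qed

lemma jac_prod:
  "(\<Prod>i\<in>corr_index \<beta> N. f (fst (snd i))) = (\<Prod>k<N. f k ^ ((N - Suc k) * \<beta>))"
proof -
  have eq: "corr_index \<beta> N = (\<lambda>(k, j, s). (j, k, s)) ` (SIGMA k:{..<N}. {k<..<N} \<times> {..<\<beta>})"
    by (auto simp: corr_index_def image_iff)
  have inj: "inj_on (\<lambda>(k, j, s). (j, k, s)) (SIGMA k:{..<N}. {k<..<N} \<times> {..<\<beta>})"
    by (auto simp: inj_on_def)
  have "(\<Prod>i\<in>corr_index \<beta> N. f (fst (snd i))) = (\<Prod>x\<in>(SIGMA k:{..<N}. {k<..<N} \<times> {..<\<beta>}). f (fst x))"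
    unfolding eq by (subst prod.reindex[OF inj]) (simp add: comp_def case_prod_unfold)
  also have "\<dots> = (\<Prod>(k, y)\<in>(SIGMA k:{..<N}. {k<..<N} \<times> {..<\<beta>}). f k)"
    by (simp add: case_prod_unfold)
  also have "\<dots> = (\<Prod>k<N. \<Prod>y\<in>{k<..<N} \<times> {..<\<beta>}. f k)"
    by (rule prod.Sigma[symmetric]) auto
  also have "\<dots> = (\<Prod>k<N. f k ^ ((N - Suc k) * \<beta>))"
    by (simp add: card_cartesian_product)
  finally show ?thesis .
qed

lemma m_Complex: "f \<in> borel_measurable M \<Longrightarrow> g \<in> borel_measurable M \<Longrightarrow> (\<lambda>x. Complex (f x) (g x)) \<in> borel_measurable M"
  by (simp add: borel_measurable_complex_iff)

lemma m_cnj: "f \<in> borel_measurable M \<Longrightarrow> (\<lambda>x. cnj (f x)) \<in> borel_measurable M"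
  by (simp add: borel_measurable_complex_iff borel_measurable_uminus)

lemma m_Re: "f \<in> borel_measurable M \<Longrightarrow> (\<lambda>x. Re (f x)) \<in> borel_measurable M"
  by (simp add: borel_measurable_complex_iff)

lemma m_Im: "f \<in> borel_measurable M \<Longrightarrow> (\<lambda>x. Im (f x)) \<in> borel_measurable M"
  by (simp add: borel_measurable_complex_iff)

lemma m_rowsq: "(\<lambda>w. rowsq \<beta> w j) \<in> borel_measurable (PiM J (\<lambda>_. lborel))"
  unfolding rowsq_def by (rule sumsq_meas)

lemma m_cc: "(\<lambda>w. cc \<beta> w k) \<in> borel_measurable (PiM J (\<lambda>_. lborel))"
proof -
  have r[measurable]: "(\<lambda>w. rowsq \<beta> w k) \<in> borel_measurable (PiM J (\<lambda>_. lborel))" by (rule m_rowsq)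
  show ?thesis unfolding cc_def by measurable
qed

lemma m_Eent: "(\<lambda>w. Eent \<beta> w p r) \<in> borel_measurable (PiM J (\<lambda>_. lborel))"
proof -
  note c = measurable_coord_any[where I=J]
  have cx: "(\<lambda>w. Complex (w x) (w y)) \<in> borel_measurable (PiM J (\<lambda>_. lborel))" for x y
    by (intro m_Complex c)
  show ?thesis
  proof (cases "\<beta> = 4")
    case True
    show ?thesis unfolding Eent_def low_block_def Let_def using True
      by (cases "p mod 2 = 0"; cases "r mod 2 = 0") (simp_all add: cx borel_measurable_uminus m_cnj)
  next
    case False
    show ?thesis unfolding Eent_def low_entry_def using False
      by (cases "\<beta> = 2") (auto intro!: m_Complex c)
  qed
qed

lemma m_Ssum: "(\<lambda>w. Ssum \<beta> w p q) \<in> borel_measurable (PiM J (\<lambda>_. lborel))"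
  unfolding Ssum_def by (intro borel_measurable_sum borel_measurable_times m_cnj m_Eent)

lemma m_dco: "(\<lambda>w. dco \<beta> w i) \<in> borel_measurable (PiM J (\<lambda>_. lborel))"
proof -
  obtain j k s where i: "i = (j, k, s)" by (cases i) auto
  show ?thesis unfolding i dco_def compo_def
    by (cases "even s") (simp_all add: m_Re m_Im m_Ssum)
qed

definition Fr :: "nat \<Rightarrow> real \<Rightarrow> (nat \<times> nat \<times> nat \<Rightarrow> real) \<Rightarrow> nat \<Rightarrow> ennreal" where
  "Fr \<beta> e w j = indicator {w. rowsq \<beta> w j < 1} w * ennreal ((1 - rowsq \<beta> w j) powr e)"

lemma m_Fr: "(\<lambda>w. \<Prod>j<N. Fr \<beta> e w j) \<in> borel_measurable (PiM J (\<lambda>_. lborel))"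
  unfolding Fr_def rowsq_def by (intro borel_measurable_prod_ennreal ball_integrand_meas)

lemma Fr_good: "rowsq \<beta> w j < 1 \<Longrightarrow> Fr \<beta> e w j = ennreal ((1 - rowsq \<beta> w j) powr e)"
  by (simp add: Fr_def)

lemma prod_Fr_good:
  assumes "\<forall>j<N. rowsq \<beta> w j < 1"
  shows "(\<Prod>j<N. Fr \<beta> (e j) w j) = ennreal (\<Prod>j<N. (1 - rowsq \<beta> w j) powr e j)"
proof -
  have "(\<Prod>j<N. Fr \<beta> (e j) w j) = (\<Prod>j<N. ennreal ((1 - rowsq \<beta> w j) powr e j))"
    using assms by (intro prod.cong refl) (simp add: Fr_good)
  also have "\<dots> = ennreal (\<Prod>j<N. (1 - rowsq \<beta> w j) powr e j)" by (rule prod_ennreal) simp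
  finally show ?thesis .
qed

lemma prod_Fr_bad:
  assumes "\<not> (\<forall>j<N. rowsq \<beta> w j < 1)"
  shows "(\<Prod>j<N. Fr \<beta> (e j) w j) = 0"
proof -
  obtain j where "j < N" "\<not> rowsq \<beta> w j < 1" using assms by auto
  thus ?thesis by (intro prod_zero) (auto simp: Fr_def intro!: bexI[of _ j])
qed

lemma gT:
  assumes \<beta>: "\<beta> \<in> {1, 2, 4}"
  shows "indicator (corr_set \<beta> N) (Tmap \<beta> N w) * ennreal (corr_det \<beta> N (Tmap \<beta> N w) powr a)
       = (\<Prod>j<N. Fr \<beta> a w j)"
proof (cases "\<forall>j<N. rowsq \<beta> w j < 1")
  case True
  show ?thesis
    using Tmap_good_in[OF \<beta> True] Tmap_good_det[OF \<beta> True] prod_Fr_good[OF True, of "\<lambda>_. a"]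
    by (simp add: prod_powr_distrib)
next
  case False
  show ?thesis using Tmap_bad_notin[OF \<beta> False] prod_Fr_bad[OF False, of "\<lambda>_. a"] by simp
qed

lemma gTJ:
  assumes \<beta>: "\<beta> \<in> {1, 2, 4}"
  shows "indicator (corr_set \<beta> N) (Tmap \<beta> N w) * ennreal (corr_det \<beta> N (Tmap \<beta> N w) powr a)
           * ennreal (\<Prod>i\<in>corr_index \<beta> N. cc \<beta> w (fst (snd i)))
       = (\<Prod>j<N. Fr \<beta> (a + real \<beta> * real (N - 1 - j) / 2) w j)"
proof (cases "\<forall>j<N. rowsq \<beta> w j < 1")
  case True
  define x where "x j = 1 - rowsq \<beta> w j" for j
  have xpos: "j < N \<Longrightarrow> x j > 0" for j using True by (simp add: x_def)
  have "(\<Prod>i\<in>corr_index \<beta> N. cc \<beta> w (fst (snd i))) = (\<Prod>k<N. cc \<beta> w k ^ ((N - Suc k) * \<beta>))"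
    by (rule jac_prod)
  also have "\<dots> = (\<Prod>k<N. x k powr (real \<beta> * real (N - 1 - k) / 2))"
  proof (intro prod.cong refl)
    fix k assume "k \<in> {..<N}"
    hence k: "k < N" by simp
    have "cc \<beta> w k = sqrt (x k)" using True k by (simp add: cc_def x_def)
    also have "\<dots> = x k powr (1/2)" using xpos[OF k] by (simp add: powr_half_sqrt)
    finally have "cc \<beta> w k = x k powr (1/2)" .
    hence "cc \<beta> w k ^ ((N - Suc k) * \<beta>) = x k powr (real ((N - Suc k) * \<beta>) * (1/2))"
      using xpos[OF k] by (simp add: powr_power)
    also have "real ((N - Suc k) * \<beta>) * (1/2) = real \<beta> * real (N - 1 - k) / 2" by simp
    finally show "cc \<beta> w k ^ ((N - Suc k) * \<beta>) = x k powr (real \<beta> * real (N - 1 - k) / 2)" .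
  qed
  finally have J: "(\<Prod>i\<in>corr_index \<beta> N. cc \<beta> w (fst (snd i))) = (\<Prod>k<N. x k powr (real \<beta> * real (N - 1 - k) / 2))" .
  have "indicator (corr_set \<beta> N) (Tmap \<beta> N w) * ennreal (corr_det \<beta> N (Tmap \<beta> N w) powr a)
      = ennreal (\<Prod>j<N. x j powr a)"
    using gT[OF \<beta>, of N w a] prod_Fr_good[OF True, of "\<lambda>_. a"] by (simp add: x_def)
  moreover have "(\<Prod>j<N. x j powr a) * (\<Prod>k<N. x k powr (real \<beta> * real (N - 1 - k) / 2))
      = (\<Prod>j<N. x j powr (a + real \<beta> * real (N - 1 - j) / 2))"
    by (simp add: powr_add prod.distrib)
  ultimately show ?thesis
    using prod_Fr_good[OF True, of "\<lambda>j. a + real \<beta> * real (N - 1 - j) / 2"] J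
    by (simp add: x_def ennreal_mult'[symmetric] prod_nonneg)
next
  case False
  show ?thesis using Tmap_bad_notin[OF \<beta> False] prod_Fr_bad[OF False] by simp
qed

lemma integral_value:
  fixes N \<beta> :: nat and a :: real
  assumes \<beta>: "\<beta> \<in> {1, 2, 4}" and a: "a > -1"
  shows "(\<integral>\<^sup>+ x. indicator (corr_set \<beta> N) x * ennreal (corr_det \<beta> N x powr a) \<partial>corr_measure \<beta> N)
       = ennreal (\<Prod>j<N. \<Prod>i<\<beta>*j. Beta (a + real \<beta> * real (N - 1 - j) / 2 + 1 + real i / 2) (1/2))"
proof -
  let ?I = "corr_index \<beta> N"
  let ?M = "PiM ?I (\<lambda>_. lborel :: real measure)"
  define c where "c i w = cc \<beta> w (fst (snd i))" for i :: "nat \<times> nat \<times> nat" and w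
  define d where "d i w = dco \<beta> w i" for i :: "nat \<times> nat \<times> nat" and w
  define g where "g x = indicator (corr_set \<beta> N) x * ennreal (corr_det \<beta> N x powr a)" for x
  have T: "(\<lambda>i\<in>?I. c i w * w i + d i w) = Tmap \<beta> N w" for w
    by (simp add: Tmap_def c_def d_def)
  have dep: "c i w = c i w' \<and> d i w = d i w'"
    if iI: "i \<in> ?I" and agree: "\<And>j. j \<in> ?I \<Longrightarrow> rk N j < rk N i \<Longrightarrow> w j = w' j" for i w w'
  proof -
    obtain j k s where i: "i = (j, k, s)" by (cases i) auto
    have h1: "(j, k, s) \<in> ?I" using iI i by simp
    have h2: "w i' = w' i'" if "i' \<in> ?I" "rk N i' < rk N (j, k, s)" for i'
      by (rule agree) (use that i in simp_all)
    have "cc \<beta> w k = cc \<beta> w' k \<and> dco \<beta> w (j, k, s) = dco \<beta> w' (j, k, s)"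
      by (rule dep_cd[OF \<beta> h1 h2])
    thus ?thesis unfolding i c_def d_def by simp
  qed
  have pos: "c i w > 0" for i w by (simp add: c_def cc_pos)
  have mc: "c i \<in> borel_measurable (PiM J (\<lambda>_. lborel))" for i J
    unfolding c_def by (rule m_cc)
  have md: "d i \<in> borel_measurable (PiM J (\<lambda>_. lborel))" for i J
    unfolding d_def by (rule m_dco)
  obtain S where Sm: "S \<in> ?M \<rightarrow>\<^sub>M ?M" and Sinv: "\<forall>\<rho>\<in>space ?M. (\<lambda>i\<in>?I. c i (S \<rho>) * S \<rho> i + d i (S \<rho>)) = \<rho>"
    using tri_inv[OF finite_corr_index inj_rk[OF \<beta>, of N] dep pos mc md] by (rule bexE)
  have gm: "g \<in> borel_measurable ?M"
  proof -
    have "(\<lambda>\<rho>. \<Prod>j<N. Fr \<beta> a (S \<rho>) j) \<in> borel_measurable ?M"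
      using measurable_comp[OF Sm m_Fr[where N=N and \<beta>=\<beta> and e=a and J="?I"]] by (simp add: comp_def)
    moreover have "g \<rho> = (\<Prod>j<N. Fr \<beta> a (S \<rho>) j)" if "\<rho> \<in> space ?M" for \<rho>
    proof -
      have "g \<rho> = g (Tmap \<beta> N (S \<rho>))" using Sinv that T by simp
      also have "\<dots> = (\<Prod>j<N. Fr \<beta> a (S \<rho>) j)" unfolding g_def by (rule gT[OF \<beta>])
      finally show ?thesis .
    qed
    ultimately show ?thesis by (simp cong: measurable_cong)
  qed
  have "(\<integral>\<^sup>+ x. g x \<partial>?M) = (\<integral>\<^sup>+w. g (\<lambda>i\<in>?I. c i w * w i + d i w) * ennreal (\<Prod>i\<in>?I. c i w) \<partial>?M)"
    by (rule tri_cov[OF finite_corr_index inj_rk[OF \<beta>, of N] dep pos mc md gm, symmetric])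
  also have "\<dots> = (\<integral>\<^sup>+w. (\<Prod>j<N. Fr \<beta> (a + real \<beta> * real (N - 1 - j) / 2) w j) \<partial>?M)"
    unfolding T g_def by (simp only: c_def gTJ[OF \<beta>])
  also have "\<dots> = ennreal (\<Prod>j<N. \<Prod>i<\<beta>*j. Beta (a + real \<beta> * real (N - 1 - j) / 2 + 1 + real i / 2) (1/2))"
    unfolding Fr_def
  proof (rule rows_int)
    fix j
    have "real \<beta> * real (N - 1 - j) / 2 \<ge> 0" by simp
    thus "a + real \<beta> * real (N - 1 - j) / 2 > -1" using a by linarith
  qed
  finally show ?thesis unfolding g_def corr_measure_def .
qed

theorem mainTheorem5:
  fixes N \<beta> :: nat and a :: real
  assumes "N \<ge> 2" and "a > -1" and "\<beta> \<in> {1, 2, 4}"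
  shows "(\<integral>\<^sup>+ x. indicator (corr_set \<beta> N) x * ennreal (corr_det \<beta> N x powr a)
            \<partial>corr_measure \<beta> N)
         = ennreal (\<Prod>k=1..N-1. \<Prod>s<\<beta>.
              (Beta (a + (real \<beta> * real k + 1 - real s) / 2) (1/2)) ^ k) \<and>
         (\<Prod>k=1..N-1. \<Prod>s<\<beta>. (Beta (a + (real \<beta> * real k + 1 - real s) / 2) (1/2 :: real)) ^ k)
         = (\<Prod>k=1..N-1. (pi powr (real \<beta> / 2) * Gamma (a + real \<beta> * (real k - 1) / 2 + 1)
                          / Gamma (a + real \<beta> * real k / 2 + 1)) ^ k) \<and>
         (\<Prod>k=1..N-1. (pi powr (real \<beta> / 2) * Gamma (a + real \<beta> * (real k - 1) / 2 + 1)
                          / Gamma (a + real \<beta> * real k / 2 + 1)) ^ k)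
         = pi powr (real \<beta> * real N * (real N - 1) / 4)
           / (Gamma (a + real \<beta> / 2 * (real N - 1) + 1)) ^ (N - 1)
           * (\<Prod>k=1..N-1. Gamma (a + real \<beta> / 2 * (real k - 1) + 1))"
proof -
  have N1: "N \<ge> 1" using assms(1) by simp
  note c2 = claim2[OF assms(2), where N=N and \<beta>=\<beta>]
  note c3 = claim3[OF assms(2) N1, where \<beta>=\<beta>]
  have iv: "(\<Prod>j<N. \<Prod>i<\<beta>*j. Beta (a + real \<beta> * real (N - 1 - j) / 2 + 1 + real i / 2) (1/2))
      = (\<Prod>j<N. \<Prod>i<\<beta>*j. Beta (a + real \<beta> * (real N - 1 - real j) / 2 + 1 + real i / 2) (1/2))"
    by (intro prod.cong refl arg_cong[where f="\<lambda>u. Beta u (1/2)"]) (simp add: of_nat_diff algebra_simps)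
  have c1: "(\<integral>\<^sup>+ x. indicator (corr_set \<beta> N) x * ennreal (corr_det \<beta> N x powr a) \<partial>corr_measure \<beta> N)
         = ennreal (\<Prod>k=1..N-1. \<Prod>s<\<beta>. (Beta (a + (real \<beta> * real k + 1 - real s) / 2) (1/2)) ^ k)"
    unfolding integral_value[OF assms(3,2)] iv int_value_eq[OF assms(2) N1] c2 c3 ..
  show ?thesis using c1 c2 c3 by blast
qed

end
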